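(* Let $C$ be a bivariate copula and let $C^\uparrow$ and $C^\downarrow$ be its increasing and decreasing rearranged copulas. Then (i) $\xi(C^\downarrow)=\xi(C)=\xi(C^\uparrow)$; (ii) $\rho(C^\downarrow)\le\rho(C)\le\rho(C^\uparrow)$ and $\rho(C^\downarrow)=-\rho(C^\uparrow)$.
   Context: A bivariate copula is a function $C:[0,1]^2\to[0,1]$ that is grounded, has uniform margins and is 2-increasing. $\rho(C)=12\int_{[0,1]^2}C\,du\,dv-3$ and $\xi(C)=6\int_0^1\int_0^1(\partial_1C(t,v))^2\,dt\,dv-2$, with $\partial_1$ the partial derivative in the first argument. A copula is SI (resp. SD) if it is concave (resp. convex) in its first argument. For measurable $f,g:[0,1]\to[0,1]$, write $f\prec_S g$ if $\int_0^x f^*(t)\,dt\le\int_0^x g^*(t)\,dt$ for all $x\in(0,1)$ and $\int_0^1 f=\int_0^1 g$, where $h^*$ denotes the decreasing rearrangement of $h$ (the a.e.-unique decreasing function with $\lambda(h^*\ge s)=\lambda(h\ge s)$ for all $s$). For copulas $D,E$, write $D\le_{\partial_1S}E$ if $\partial_1D(\cdot,v)\prec_S\partial_1E(\cdot,v)$ for all $v\in[0,1]$, and $D=_{\partial_1S}E$ if both $D\le_{\partial_1S}E$ and $E\le_{\partial_1S}D$. It is known that for every copula $C$ there exist a unique SI copula $C^\uparrow$ and a unique SD copula $C^\downarrow$ with $C^\downarrow=_{\partial_1S}C=_{\partial_1S}C^\uparrow$; these are called the increasing and decreasing rearranged copulas of $C$, and they satisfy $C^\downarrow(u,v)=v-C^\uparrow(1-u,v)$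 and $C^\downarrow\le C\le C^\uparrow$ pointwise. *)

theory Defs
  imports "HOL-Analysis.Analysis"
begin

text \<open>Bivariate copulas, viewed as functions real => real => real whose values
  outside the unit square are irrelevant.\<close>
definition copula :: "(real \<Rightarrow> real \<Rightarrow> real) \<Rightarrow> bool" where
  "copula C \<longleftrightarrow>
     (\<forall>u\<in>{0..1}. \<forall>v\<in>{0..1}. C u v \<in> {0..1}) \<and>
     (\<forall>u\<in>{0..1}. C u 0 = 0 \<and> C 0 u = 0) \<and>
     (\<forall>u\<in>{0..1}. C u 1 = u \<and> C 1 u = u) \<and>
     (\<forall>u1\<in>{0..1}. \<forall>u2\<in>{0..1}. \<forall>v1\<in>{0..1}. \<forall>v2\<in>{0..1}.
        u1 \<le> u2 \<longrightarrow> v1 \<le> v2 \<longrightarrow> C u2 v2 - C u2 v1 - C u1 v2 + C u1 v1 \<ge> 0)"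

text \<open>Partial derivative in the first argument (where it exists; set to 0 elsewhere,
  which is a null set for copulas).\<close>
definition d1 :: "(real \<Rightarrow> real \<Rightarrow> real) \<Rightarrow> real \<Rightarrow> real \<Rightarrow> real" where
  "d1 C t v = (if \<exists>D. ((\<lambda>s. C s v) has_real_derivative D) (at t)
               then (THE D. ((\<lambda>s. C s v) has_real_derivative D) (at t)) else 0)"

definition spearman_rho :: "(real \<Rightarrow> real \<Rightarrow> real) \<Rightarrow> real" where
  "spearman_rho C = 12 * integral ({0..1} \<times> {0..1}) (\<lambda>(u, v). C u v) - 3"

definition chatterjee_xi :: "(real \<Rightarrow> real \<Rightarrow> real) \<Rightarrow> real" where
  "chatterjee_xi C = 6 * integral ({0..1} \<times> {0..1}) (\<lambda>(t, v). (d1 C t v)\<^sup>2) - 2"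

definition SI :: "(real \<Rightarrow> real \<Rightarrow> real) \<Rightarrow> bool" where
  "SI C \<longleftrightarrow> (\<forall>v\<in>{0..1}. concave_on {0..1} (\<lambda>u. C u v))"

definition SD :: "(real \<Rightarrow> real \<Rightarrow> real) \<Rightarrow> bool" where
  "SD C \<longleftrightarrow> (\<forall>v\<in>{0..1}. convex_on {0..1} (\<lambda>u. C u v))"

definition is_decr_rearr :: "(real \<Rightarrow> real) \<Rightarrow> (real \<Rightarrow> real) \<Rightarrow> bool" where
  "is_decr_rearr f g \<longleftrightarrow> antimono_on {0..1} g \<and>
     (\<forall>s. measure lborel {t\<in>{0..1}. g t \<ge> s} = measure lborel {x\<in>{0..1}. f x \<ge> s})"

definition schur_le :: "(real \<Rightarrow> real) \<Rightarrow> (real \<Rightarrow> real) \<Rightarrow> bool" where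
  "schur_le f g \<longleftrightarrow>
     (\<forall>fs gs. is_decr_rearr f fs \<longrightarrow> is_decr_rearr g gs \<longrightarrow>
        (\<forall>x\<in>{0<..<1}. integral {0..x} fs \<le> integral {0..x} gs)) \<and>
     integral {0..1} f = integral {0..1} g"

definition d1S_le :: "(real \<Rightarrow> real \<Rightarrow> real) \<Rightarrow> (real \<Rightarrow> real \<Rightarrow> real) \<Rightarrow> bool" where
  "d1S_le D E \<longleftrightarrow> (\<forall>v\<in>{0..1}. schur_le (\<lambda>t. d1 D t v) (\<lambda>t. d1 E t v))"

definition d1S_eq :: "(real \<Rightarrow> real \<Rightarrow> real) \<Rightarrow> (real \<Rightarrow> real \<Rightarrow> real) \<Rightarrow> bool" where
  "d1S_eq D E \<longleftrightarrow> d1S_le D E \<and> d1S_le E D"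

text \<open>Increasing / decreasing rearranged copulas (unique by the known result).\<close>
definition incr_rearranged :: "(real \<Rightarrow> real \<Rightarrow> real) \<Rightarrow> (real \<Rightarrow> real \<Rightarrow> real) \<Rightarrow> bool" where
  "incr_rearranged C Cu \<longleftrightarrow> copula Cu \<and> SI Cu \<and> d1S_eq Cu C"

definition decr_rearranged :: "(real \<Rightarrow> real \<Rightarrow> real) \<Rightarrow> (real \<Rightarrow> real \<Rightarrow> real) \<Rightarrow> bool" where
  "decr_rearranged C Cd \<longleftrightarrow> copula Cd \<and> SD Cd \<and> d1S_eq Cd C"

end

theory Submission
  imports Defs
begin


section \<open>Copula basics\<close>

lemma copulaD:
  assumes "copula C"
  shows cop_range: "\<And>u v. u \<in> {0..1} \<Longrightarrow> v \<in> {0..1} \<Longrightarrow> 0 \<le> C u v \<and> C u v \<le> 1"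
    and cop_u0: "\<And>u. u \<in> {0..1} \<Longrightarrow> C u 0 = 0"
    and cop_0v: "\<And>u. u \<in> {0..1} \<Longrightarrow> C 0 u = 0"
    and cop_u1: "\<And>u. u \<in> {0..1} \<Longrightarrow> C u 1 = u"
    and cop_1v: "\<And>u. u \<in> {0..1} \<Longrightarrow> C 1 u = u"
    and cop_rect: "\<And>u1 u2 v1 v2. u1 \<in> {0..1} \<Longrightarrow> u2 \<in> {0..1} \<Longrightarrow> v1 \<in> {0..1} \<Longrightarrow> v2 \<in> {0..1} \<Longrightarrow>
        u1 \<le> u2 \<Longrightarrow> v1 \<le> v2 \<Longrightarrow> C u2 v2 - C u2 v1 - C u1 v2 + C u1 v1 \<ge> 0"
  using assms unfolding copula_def by auto

lemma cop_mono1: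
  assumes "copula C" "u1 \<in> {0..1}" "u2 \<in> {0..1}" "v \<in> {0..1}" "u1 \<le> u2"
  shows "C u1 v \<le> C u2 v"
  using cop_rect[OF assms(1), of u1 u2 0 v] cop_u0[OF assms(1)] assms by auto

lemma cop_lip1:
  assumes "copula C" "u1 \<in> {0..1}" "u2 \<in> {0..1}" "v \<in> {0..1}" "u1 \<le> u2"
  shows "C u2 v - C u1 v \<le> u2 - u1"
  using cop_rect[OF assms(1), of u1 u2 v 1] cop_u1[OF assms(1)] assms by auto

lemma cop_mono2:
  assumes "copula C" "v1 \<in> {0..1}" "v2 \<in> {0..1}" "u \<in> {0..1}" "v1 \<le> v2"
  shows "C u v1 \<le> C u v2"
  using cop_rect[OF assms(1), of 0 u v1 v2] cop_0v[OF assms(1)] assms by auto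

lemma cop_lip2:
  assumes "copula C" "v1 \<in> {0..1}" "v2 \<in> {0..1}" "u \<in> {0..1}" "v1 \<le> v2"
  shows "C u v2 - C u v1 \<le> v2 - v1"
  using cop_rect[OF assms(1), of u 1 v1 v2] cop_1v[OF assms(1)] assms by auto

lemma cop_lip1_abs:
  assumes "copula C" "u1 \<in> {0..1}" "u2 \<in> {0..1}" "v \<in> {0..1}"
  shows "\<bar>C u2 v - C u1 v\<bar> \<le> \<bar>u2 - u1\<bar>"
  using cop_lip1[OF assms(1) assms(2,3,4)] cop_lip1[OF assms(1) assms(3,2,4)]
    cop_mono1[OF assms(1) assms(2,3,4)] cop_mono1[OF assms(1) assms(3,2,4)]
  by (cases "u1 \<le> u2") auto

lemma cop_lip2_abs:
  assumes "copula C" "v1 \<in> {0..1}" "v2 \<in> {0..1}" "u \<in> {0..1}"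
  shows "\<bar>C u v2 - C u v1\<bar> \<le> \<bar>v2 - v1\<bar>"
  using cop_lip2[OF assms(1) assms(2,3,4)] cop_lip2[OF assms(1) assms(3,2,4)]
    cop_mono2[OF assms(1) assms(2,3,4)] cop_mono2[OF assms(1) assms(3,2,4)]
  by (cases "v1 \<le> v2") auto

definition clamp :: "real \<Rightarrow> real" where "clamp x = max 0 (min 1 x)"

lemma clamp_in: "clamp x \<in> {0..1}" by (auto simp: clamp_def)
lemma clamp_id: "x \<in> {0..1} \<Longrightarrow> clamp x = x" by (auto simp: clamp_def)
lemma clamp_lip: "\<bar>clamp x - clamp y\<bar> \<le> \<bar>x - y\<bar>" by (auto simp: clamp_def)
lemma clamp_mono: "x \<le> y \<Longrightarrow> clamp x \<le> clamp y" by (auto simp: clamp_def)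

definition cext :: "(real \<Rightarrow> real \<Rightarrow> real) \<Rightarrow> real \<Rightarrow> real \<Rightarrow> real" where
  "cext C s w = C (clamp s) (clamp w)"

lemma cext_lip:
  assumes "copula C"
  shows "\<bar>cext C s w - cext C s' w'\<bar> \<le> \<bar>s - s'\<bar> + \<bar>w - w'\<bar>"
proof -
  have "\<bar>cext C s w - cext C s' w'\<bar> \<le> \<bar>C (clamp s) (clamp w) - C (clamp s') (clamp w)\<bar> + \<bar>C (clamp s') (clamp w) - C (clamp s') (clamp w')\<bar>"
    unfolding cext_def by linarith
  also have "\<dots> \<le> \<bar>clamp s - clamp s'\<bar> + \<bar>clamp w - clamp w'\<bar>"
    using cop_lip1_abs[OF assms, of "clamp s'" "clamp s" "clamp w"]
      cop_lip2_abs[OF assms, of "clamp w'" "clamp w" "clamp s'"] clamp_in by auto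
  also have "\<dots> \<le> \<bar>s - s'\<bar> + \<bar>w - w'\<bar>" using clamp_lip[of s s'] clamp_lip[of w w'] by linarith
  finally show ?thesis .
qed


lemma cext_cont:
  assumes "copula C"
  shows "continuous_on UNIV (\<lambda>z. cext C (fst z) (snd z))"
proof -
  have "dist (cext C (fst z) (snd z)) (cext C (fst z') (snd z')) \<le> 2 * dist z z'" for z z' :: "real \<times> real"
  proof -
    have "\<bar>fst z - fst z'\<bar> \<le> dist z z'" "\<bar>snd z - snd z'\<bar> \<le> dist z z'"
      using dist_fst_le[of z z'] dist_snd_le[of z z'] by (auto simp: dist_real_def)
    then show ?thesis using cext_lip[OF assms, of "fst z" "snd z" "fst z'" "snd z'"] by (simp add: dist_real_def)
  qed
  then have "2-lipschitz_on UNIV (\<lambda>z. cext C (fst z) (snd z))"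
    by (auto simp: lipschitz_on_def)
  then show ?thesis by (rule lipschitz_on_continuous_on)
qed

lemma cext_eq: "s \<in> {0..1} \<Longrightarrow> w \<in> {0..1} \<Longrightarrow> cext C s w = C s w"
  by (simp add: cext_def clamp_id)



section \<open>Measurability of the partial derivative\<close>

definition dq :: "(real \<Rightarrow> real) \<Rightarrow> real \<Rightarrow> real \<Rightarrow> real" where
  "dq \<phi> t h = (\<phi> (t + h) - \<phi> t) / h"

definition cauchyP :: "(real \<Rightarrow> real) \<Rightarrow> real \<Rightarrow> bool" where
  "cauchyP \<phi> t \<longleftrightarrow> (\<forall>k::nat. \<exists>m::nat. \<forall>q1::rat. \<forall>q2::rat.
      (of_rat q1 \<noteq> (0::real) \<and> of_rat q2 \<noteq> (0::real) \<and> \<bar>of_rat q1\<bar> < 1 / (real m + 1) \<and> \<bar>of_rat q2\<bar> < 1 / (real m + 1)) \<longrightarrow>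
      \<bar>dq \<phi> t (of_rat q1) - dq \<phi> t (of_rat q2)\<bar> \<le> 1 / (real k + 1))"

lemma deriv_imp_seq:
  assumes "(\<phi> has_real_derivative D) (at t)"
  shows "(\<lambda>n. dq \<phi> t (1 / (real n + 1))) \<longlonglongrightarrow> D"
proof -
  have L: "(\<lambda>h. dq \<phi> t h) \<midarrow>0\<rightarrow> D" using assms unfolding DERIV_def dq_def .
  have s: "(\<lambda>n. 1 / (real n + 1)) \<longlonglongrightarrow> (0::real)"
    using LIMSEQ_inverse_real_of_nat by (simp add: inverse_eq_divide add.commute)
  have "eventually (\<lambda>n. 1 / (real n + 1) \<noteq> (0::real)) sequentially" by simp
  then show ?thesis using tendsto_compose_eventually[OF L s] by (simp add: o_def)
qed

lemma d1_value:
  assumes "((\<lambda>s. F s w) has_real_derivative D) (at t)"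
  shows "d1 F t w = D"
proof -
  have "(THE D. ((\<lambda>s. F s w) has_real_derivative D) (at t)) = D"
    using assms DERIV_unique by blast
  then show ?thesis using assms unfolding d1_def by auto
qed

lemma d1_value_lim:
  assumes "((\<lambda>s. F s w) has_real_derivative D) (at t)"
  shows "d1 F t w = lim (\<lambda>n. dq (\<lambda>s. F s w) t (1 / (real n + 1)))"
  using d1_value[where F=F and w=w, OF assms] deriv_imp_seq[OF assms] limI by metis

lemma deriv_imp_cauchyP:
  assumes "(\<phi> has_real_derivative D) (at t)"
  shows "cauchyP \<phi> t"
  unfolding cauchyP_def
proof
  fix k :: nat
  have L: "(\<lambda>h. dq \<phi> t h) \<midarrow>0\<rightarrow> D" using assms unfolding DERIV_def dq_def .
  have e: "1 / (2 * (real k + 1)) > 0" by simp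
  obtain s where s: "s > 0" "\<And>x. x \<noteq> 0 \<and> norm (x - 0) < s \<Longrightarrow> norm (dq \<phi> t x - D) < 1 / (2 * (real k + 1))"
    using L[unfolded LIM_eq] e by blast
  obtain m :: nat where "1 / real (Suc m) < s"
    using nat_approx_posE[OF s(1)] by blast
  then have m: "1 / (real m + 1) < s" by (simp add: add.commute)
  show "\<exists>m::nat. \<forall>q1::rat. \<forall>q2::rat.
      (of_rat q1 \<noteq> (0::real) \<and> of_rat q2 \<noteq> (0::real) \<and> \<bar>of_rat q1\<bar> < 1 / (real m + 1) \<and> \<bar>of_rat q2\<bar> < 1 / (real m + 1)) \<longrightarrow>
      \<bar>dq \<phi> t (of_rat q1) - dq \<phi> t (of_rat q2)\<bar> \<le> 1 / (real k + 1)"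
  proof (intro exI[of _ m] allI impI)
    fix q1 q2 :: rat
    assume H: "of_rat q1 \<noteq> (0::real) \<and> of_rat q2 \<noteq> (0::real) \<and> \<bar>of_rat q1\<bar> < 1 / (real m + 1) \<and> \<bar>of_rat q2\<bar> < 1 / (real m + 1)"
    have "\<bar>dq \<phi> t (of_rat q1) - D\<bar> < 1 / (2 * (real k + 1))"
      using s(2)[of "of_rat q1"] H m by auto
    moreover have "\<bar>dq \<phi> t (of_rat q2) - D\<bar> < 1 / (2 * (real k + 1))"
      using s(2)[of "of_rat q2"] H m by auto
    moreover have "1 / (2 * (real k + 1)) + 1 / (2 * (real k + 1)) = 1 / (real k + 1)"
      by (simp add: field_simps)
    ultimately show "\<bar>dq \<phi> t (of_rat q1) - dq \<phi> t (of_rat q2)\<bar> \<le> 1 / (real k + 1)"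
      by (smt (verit))
  qed
qed


lemma dq_isCont:
  assumes cont: "continuous_on UNIV \<phi>" and h: "h \<noteq> 0"
  shows "isCont (dq \<phi> t) h"
proof -
  have "isCont \<phi> (t + h)" using cont by (simp add: continuous_on_eq_continuous_at)
  then have "isCont (\<lambda>x. \<phi> (t + x)) h"
    by (intro continuous_intros isCont_o2[where f="\<lambda>x. t + x"]) auto
  then show ?thesis unfolding dq_def using h
    by (intro continuous_intros) auto
qed

lemma cauchyP_ext:
  assumes cont: "continuous_on UNIV \<phi>"
    and m: "\<forall>q1::rat. \<forall>q2::rat.
      (of_rat q1 \<noteq> (0::real) \<and> of_rat q2 \<noteq> (0::real) \<and> \<bar>of_rat q1\<bar> < 1 / (real m + 1) \<and> \<bar>of_rat q2\<bar> < 1 / (real m + 1)) \<longrightarrow>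
      \<bar>dq \<phi> t (of_rat q1) - dq \<phi> t (of_rat q2)\<bar> \<le> c"
    and h: "h \<noteq> 0" "\<bar>h\<bar> < 1 / (real m + 1)"
    and q2: "of_rat q2 \<noteq> (0::real)" "\<bar>of_rat q2\<bar> < 1 / (real m + 1)"
  shows "\<bar>dq \<phi> t h - dq \<phi> t (of_rat q2)\<bar> \<le> c"
proof (rule field_le_epsilon)
  fix e :: real assume e: "0 < e"
  have "isCont (dq \<phi> t) h" by (rule dq_isCont[OF cont h(1)])
  then obtain d where d: "d > 0" "\<And>x. dist x h < d \<Longrightarrow> dist (dq \<phi> t x) (dq \<phi> t h) < e"
    unfolding continuous_at_eps_delta using e by blast
  define \<rho> where "\<rho> = min d (min \<bar>h\<bar> (1 / (real m + 1) - \<bar>h\<bar>)) / 2"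
  have \<rho>: "\<rho> > 0" "\<rho> < d" "\<rho> < \<bar>h\<bar>" "\<rho> < 1 / (real m + 1) - \<bar>h\<bar>"
    using d h unfolding \<rho>_def by auto
  obtain r where r: "r \<in> \<rat>" "h - \<rho> < r" "r < h + \<rho>"
    using Rats_dense_in_real[of "h - \<rho>" "h + \<rho>"] \<rho> by auto
  obtain q where q: "r = of_rat q" using r(1) by (auto elim: Rats_cases)
  have rr0: "r \<noteq> 0" "\<bar>r\<bar> < 1 / (real m + 1)"
    using r \<rho> by auto
  have rr: "of_rat q \<noteq> (0::real)" "\<bar>of_rat q\<bar> < 1 / (real m + 1)"
    using rr0 unfolding q .
  have "\<bar>dq \<phi> t (of_rat q) - dq \<phi> t (of_rat q2)\<bar> \<le> c"
    using m rr q2 by blast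
  moreover have "\<bar>dq \<phi> t (of_rat q) - dq \<phi> t h\<bar> < e"
    using d(2)[of r] r \<rho> q by (auto simp: dist_real_def)
  ultimately show "\<bar>dq \<phi> t h - dq \<phi> t (of_rat q2)\<bar> \<le> c + e" by linarith
qed

lemma cauchyP_imp_deriv:
  assumes cont: "continuous_on UNIV \<phi>" and P: "cauchyP \<phi> t"
  shows "\<exists>D. (\<phi> has_real_derivative D) (at t)"
proof -
  let ?a = "\<lambda>n::nat. dq \<phi> t (1 / (real n + 1))"
  have ofr: "of_rat (1 / (of_nat n + 1)) = 1 / (real n + 1)" for n :: nat
    by (simp add: of_rat_divide of_rat_add)
  have small: "\<bar>1 / (real n + 1)\<bar> < 1 / (real m + 1)" if "n > m" for n m :: nat
    using that by (simp add: frac_less2)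
  have Ca: "Cauchy ?a"
  proof (rule CauchyI)
    fix e :: real assume e: "0 < e"
    obtain k :: nat where "1 / real (Suc k) < e"
      using nat_approx_posE[OF e] by blast
    then have k: "1 / (real k + 1) < e" by (simp add: add.commute)
    obtain m where m: "\<forall>q1::rat. \<forall>q2::rat.
      (of_rat q1 \<noteq> (0::real) \<and> of_rat q2 \<noteq> (0::real) \<and> \<bar>of_rat q1\<bar> < 1 / (real m + 1) \<and> \<bar>of_rat q2\<bar> < 1 / (real m + 1)) \<longrightarrow>
      \<bar>dq \<phi> t (of_rat q1) - dq \<phi> t (of_rat q2)\<bar> \<le> 1 / (real k + 1)"
      using P unfolding cauchyP_def by blast
    show "\<exists>M. \<forall>i\<ge>M. \<forall>j\<ge>M. norm (?a i - ?a j) < e"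
    proof (intro exI[of _ "Suc m"] allI impI)
      fix i j :: nat assume ij: "Suc m \<le> i" "Suc m \<le> j"
      have "\<bar>dq \<phi> t (of_rat (1 / (of_nat i + 1))) - dq \<phi> t (of_rat (1 / (of_nat j + 1)))\<bar> \<le> 1 / (real k + 1)"
        using m[rule_format, of "1 / (of_nat i + 1)" "1 / (of_nat j + 1)"] small[of m i] small[of m j] ij
        unfolding ofr by (auto simp del: of_nat_Suc)
      then show "norm (?a i - ?a j) < e" using k unfolding ofr by simp
    qed
  qed
  then obtain L where L: "?a \<longlonglongrightarrow> L"
    using Cauchy_convergent_iff convergent_def by blast
  have bound: "\<bar>dq \<phi> t h - L\<bar> \<le> 1 / (real k + 1)"
    if "\<forall>q1::rat. \<forall>q2::rat.
      (of_rat q1 \<noteq> (0::real) \<and> of_rat q2 \<noteq> (0::real) \<and> \<bar>of_rat q1\<bar> < 1 / (real m + 1) \<and> \<bar>of_rat q2\<bar> < 1 / (real m + 1)) \<longrightarrow>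
      \<bar>dq \<phi> t (of_rat q1) - dq \<phi> t (of_rat q2)\<bar> \<le> 1 / (real k + 1)"
      "h \<noteq> 0" "\<bar>h\<bar> < 1 / (real m + 1)" for h k m
  proof -
    have "\<forall>n\<ge>Suc m. \<bar>dq \<phi> t h - ?a n\<bar> \<le> 1 / (real k + 1)"
    proof (intro allI impI)
      fix n assume n: "Suc m \<le> n"
      have "\<bar>dq \<phi> t h - dq \<phi> t (of_rat (1 / (of_nat n + 1)))\<bar> \<le> 1 / (real k + 1)"
        by (rule cauchyP_ext[OF cont that(1) that(2,3)]) (use small[of m n] n in \<open>auto simp: ofr\<close>)
      then show "\<bar>dq \<phi> t h - ?a n\<bar> \<le> 1 / (real k + 1)" unfolding ofr .
    qed
    moreover have "(\<lambda>n. \<bar>dq \<phi> t h - ?a n\<bar>) \<longlonglongrightarrow> \<bar>dq \<phi> t h - L\<bar>"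
      by (intro tendsto_intros L)
    ultimately show ?thesis using LIMSEQ_le_const2 by blast
  qed
  have "(\<phi> has_real_derivative L) (at t)"
    unfolding DERIV_def LIM_eq
  proof (intro allI impI)
    fix r :: real assume r: "0 < r"
    obtain k :: nat where "1 / real (Suc k) < r"
      using nat_approx_posE[OF r] by blast
    then have k: "1 / (real k + 1) < r" by (simp add: add.commute)
    obtain m where m: "\<forall>q1::rat. \<forall>q2::rat.
      (of_rat q1 \<noteq> (0::real) \<and> of_rat q2 \<noteq> (0::real) \<and> \<bar>of_rat q1\<bar> < 1 / (real m + 1) \<and> \<bar>of_rat q2\<bar> < 1 / (real m + 1)) \<longrightarrow>
      \<bar>dq \<phi> t (of_rat q1) - dq \<phi> t (of_rat q2)\<bar> \<le> 1 / (real k + 1)"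
      using P unfolding cauchyP_def by blast
    show "\<exists>s>0. \<forall>x. x \<noteq> 0 \<and> norm (x - 0) < s \<longrightarrow> norm ((\<phi> (t + x) - \<phi> t) / x - L) < r"
    proof (intro exI[of _ "1 / (real m + 1)"] conjI allI impI)
      fix x :: real assume x: "x \<noteq> 0 \<and> norm (x - 0) < 1 / (real m + 1)"
      have "\<bar>dq \<phi> t x - L\<bar> \<le> 1 / (real k + 1)" using bound[OF m] x by auto
      then show "norm ((\<phi> (t + x) - \<phi> t) / x - L) < r" using k by (simp add: dq_def)
    qed simp
  qed
  then show ?thesis by blast
qed

lemma deriv_iff_cauchyP:
  assumes "continuous_on UNIV \<phi>"
  shows "(\<exists>D. (\<phi> has_real_derivative D) (at t)) \<longleftrightarrow> cauchyP \<phi> t"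
  using assms cauchyP_imp_deriv deriv_imp_cauchyP by blast


definition d1G :: "(real \<Rightarrow> real \<Rightarrow> real) \<Rightarrow> real \<times> real \<Rightarrow> real" where
  "d1G F z = (if cauchyP (\<lambda>s. F s (snd z)) (fst z)
     then lim (\<lambda>n. dq (\<lambda>s. F s (snd z)) (fst z) (1 / (real n + 1))) else 0)"

lemma d1_eq_d1G:
  assumes cont: "continuous_on UNIV (\<lambda>z. F (fst z) (snd z))"
  shows "d1 F t w = d1G F (t, w)"
proof -
  have c1: "continuous_on UNIV (\<lambda>s. F s w)"
  proof -
    have "continuous_on UNIV ((\<lambda>z. F (fst z) (snd z)) \<circ> (\<lambda>s. (s, w)))"
      by (intro continuous_on_compose continuous_intros continuous_on_subset[OF cont]) auto
    then show ?thesis by (simp add: o_def)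
  qed
  show ?thesis
  proof (cases "\<exists>D. ((\<lambda>s. F s w) has_real_derivative D) (at t)")
    case True
    then obtain D where D: "((\<lambda>s. F s w) has_real_derivative D) (at t)" by blast
    show ?thesis using d1_value_lim[where F=F and w=w, OF D] deriv_imp_cauchyP[OF D]
      by (simp add: d1G_def)
  next
    case False
    then show ?thesis using deriv_iff_cauchyP[OF c1, of t] by (simp add: d1G_def d1_def)
  qed
qed

lemma d1G_measurable:
  assumes cont: "continuous_on UNIV (\<lambda>z. F (fst z) (snd z))"
  shows "d1G F \<in> borel_measurable borel"
proof -
  have m1[measurable]: "(\<lambda>z. F (fst z + c) (snd z)) \<in> borel_measurable borel" for c
  proof -
    have "continuous_on UNIV ((\<lambda>z. F (fst z) (snd z)) \<circ> (\<lambda>z. (fst z + c, snd z)))"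
      by (intro continuous_on_compose continuous_intros continuous_on_subset[OF cont]) auto
    then show ?thesis by (intro borel_measurable_continuous_onI) (simp add: o_def)
  qed
  have m0[measurable]: "(\<lambda>z. F (fst z) (snd z)) \<in> borel_measurable borel"
    using m1[of 0] by simp
  have m2[measurable]: "(\<lambda>z. dq (\<lambda>s. F s (snd z)) (fst z) c) \<in> borel_measurable borel" for c
    unfolding dq_def by measurable
  have p[measurable]: "Measurable.pred borel (\<lambda>z. cauchyP (\<lambda>s. F s (snd z)) (fst z))"
    unfolding cauchyP_def
    by measurable
  show ?thesis unfolding d1G_def
  proof (rule measurable_If)
    show "{x \<in> space borel. cauchyP (\<lambda>s. F s (snd x)) (fst x)} \<in> sets borel"
      using p by (simp add: pred_def)
  qed measurable
qed

lemma d1_measurable_pair: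
  assumes cont: "continuous_on UNIV (\<lambda>z. F (fst z) (snd z))"
  shows "(\<lambda>z. d1 F (fst z) (snd z)) \<in> borel_measurable borel"
proof -
  have "(\<lambda>z. d1 F (fst z) (snd z)) = d1G F"
    using d1_eq_d1G[OF cont] by (auto simp: fun_eq_iff)
  then show ?thesis using d1G_measurable[OF cont] by simp
qed



section \<open>Integration tools\<close>

lemma deriv_seq:
  assumes "(\<phi> has_real_derivative D) (at t)" "\<delta> \<longlonglongrightarrow> 0" "\<And>n. \<delta> n \<noteq> 0"
  shows "(\<lambda>n. dq \<phi> t (\<delta> n)) \<longlonglongrightarrow> D"
proof -
  have L: "(\<lambda>h. dq \<phi> t h) \<midarrow>0\<rightarrow> D" using assms(1) unfolding DERIV_def dq_def .
  have "eventually (\<lambda>n. \<delta> n \<noteq> 0) sequentially" using assms(3) by simp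
  then show ?thesis using tendsto_compose_eventually[OF L assms(2)] by (simp add: o_def)
qed

lemma borel_lebesgue_on:
  fixes f :: "'a::euclidean_space \<Rightarrow> 'b::euclidean_space"
  assumes "f \<in> borel_measurable borel"
  shows "f \<in> borel_measurable (lebesgue_on S)"
proof -
  have "f \<in> borel_measurable lborel" using assms by simp
  then have "f \<in> borel_measurable lebesgue" by (rule measurable_completion)
  then show ?thesis by (rule measurable_restrict_space1)
qed

lemma borel_bounded_integrable:
  fixes f :: "real \<Rightarrow> real"
  assumes "f \<in> borel_measurable borel" "\<And>x. x \<in> {a..b} \<Longrightarrow> \<bar>f x\<bar> \<le> B"
  shows "f integrable_on {a..b}"
  by (rule measurable_bounded_by_integrable_imp_integrable[where g="\<lambda>_. B"])
     (use assms borel_lebesgue_on in auto)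

lemma Qint:
  fixes g :: "real \<Rightarrow> real"
  assumes cont: "continuous_on UNIV g" and ab: "a \<le> b" and h: "h > 0"
  shows "((\<lambda>t. dq g t h) has_integral
          ((integral {a-1..b+h} g - integral {a-1..a+h} g) - (integral {a-1..b} g - integral {a-1..a} g)) / h) {a..b}"
proof -
  let ?c = "a - 1"
  define \<Psi> where "\<Psi> x = integral {?c..x} g" for x
  have dP: "(\<Psi> has_real_derivative g x) (at x)" if "x > ?c" for x
  proof -
    have "(\<Psi> has_vector_derivative g x) (at x within {?c..x+1})"
      unfolding \<Psi>_def
      by (rule integral_has_vector_derivative) (use that cont continuous_on_subset in auto)
    moreover have "at x within {?c..x+1} = at x"
      by (rule at_within_interior) (use that in auto)
    ultimately show ?thesis by (simp add: has_real_derivative_iff_has_vector_derivative)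
  qed
  define P where "P t = (\<Psi> (t + h) - \<Psi> t) / h" for t
  have dPP: "(P has_real_derivative dq g t h) (at t)" if "t \<in> {a..b}" for t
  proof -
    have "((\<lambda>t. \<Psi> (t + h)) has_real_derivative g (t + h) * 1) (at t)"
      by (rule DERIV_chain2[OF dP]) (use that h in \<open>auto intro!: derivative_eq_intros\<close>)
    moreover have "(\<Psi> has_real_derivative g t) (at t)" using dP that by auto
    ultimately show ?thesis unfolding P_def dq_def using h
      by (auto intro!: derivative_eq_intros)
  qed
  have "((\<lambda>t. dq g t h) has_integral (P b - P a)) {a..b}"
    by (rule fundamental_theorem_of_calculus[OF ab])
       (use dPP in \<open>auto simp: has_real_derivative_iff_has_vector_derivative[symmetric] intro: DERIV_subset\<close>)
  moreover have "P b - P a = ((integral {a-1..b+h} g - integral {a-1..a+h} g) - (integral {a-1..b} g - integral {a-1..a} g)) / h"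
    unfolding P_def \<Psi>_def by (simp add: divide_simps)
  ultimately show ?thesis by simp
qed


lemma Psi_deriv:
  fixes g :: "real \<Rightarrow> real"
  assumes cont: "continuous_on UNIV g" and x: "x > c"
  shows "((\<lambda>x. integral {c..x} g) has_real_derivative g x) (at x)"
proof -
  have "((\<lambda>x. integral {c..x} g) has_vector_derivative g x) (at x within {c..x+1})"
    by (rule integral_has_vector_derivative) (use x cont continuous_on_subset in auto)
  moreover have "at x within {c..x+1} = at x"
    by (rule at_within_interior) (use x in auto)
  ultimately show ?thesis by (simp add: has_real_derivative_iff_has_vector_derivative)
qed

lemma Qlim:
  fixes g :: "real \<Rightarrow> real"
  assumes cont: "continuous_on UNIV g" and ab: "a \<le> b"
    and \<delta>: "\<And>n. \<delta> n > 0" "\<delta> \<longlonglongrightarrow> 0"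
  shows "(\<lambda>n. integral {a..b} (\<lambda>t. dq g t (\<delta> n))) \<longlonglongrightarrow> g b - g a"
proof -
  define \<Psi> where "\<Psi> = (\<lambda>x. integral {a-1..x} g)"
  have eq: "integral {a..b} (\<lambda>t. dq g t (\<delta> n)) = dq \<Psi> b (\<delta> n) - dq \<Psi> a (\<delta> n)" for n
    using Qint[OF cont ab \<delta>(1)[of n]] unfolding \<Psi>_def dq_def
    by (simp add: integral_unique diff_divide_distrib)
  have "(\<lambda>n. dq \<Psi> b (\<delta> n)) \<longlonglongrightarrow> g b"
    by (rule deriv_seq[OF _ \<delta>(2)]) (use Psi_deriv[OF cont, of "a-1" b] ab \<delta>(1) in \<open>auto simp: \<Psi>_def less_imp_neq[symmetric]\<close>)
  moreover have "(\<lambda>n. dq \<Psi> a (\<delta> n)) \<longlonglongrightarrow> g a"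
    by (rule deriv_seq[OF _ \<delta>(2)]) (use Psi_deriv[OF cont, of "a-1" a] \<delta>(1) in \<open>auto simp: \<Psi>_def less_imp_neq[symmetric]\<close>)
  ultimately show ?thesis unfolding eq by (intro tendsto_intros)
qed

lemma Qint_integrable:
  fixes g :: "real \<Rightarrow> real"
  assumes cont: "continuous_on UNIV g" and ab: "a \<le> b" and h: "h > 0"
  shows "(\<lambda>t. dq g t h) integrable_on {a..b}"
  using Qint[OF assms] by blast

lemma fatou_deriv:
  fixes F :: "real \<Rightarrow> real \<Rightarrow> real"
  assumes cont: "continuous_on UNIV (\<lambda>s. F s w)"
    and mono: "\<And>x y. x \<le> y \<Longrightarrow> F x w \<le> F y w"
    and meas: "(\<lambda>t. d1 F t w) \<in> borel_measurable borel"
    and bnd: "\<And>t. 0 \<le> d1 F t w \<and> d1 F t w \<le> 1"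
    and ab: "a \<le> b"
  shows "(\<lambda>t. d1 F t w) integrable_on {a..b}"
    and "integral {a..b} (\<lambda>t. d1 F t w) \<le> F b w - F a w"
proof -
  let ?f = "\<lambda>t. d1 F t w"
  let ?g = "\<lambda>s. F s w"
  define \<delta> where "\<delta> n = 1 / (real n + 1)" for n :: nat
  have \<delta>: "\<And>n. \<delta> n > 0" "\<delta> \<longlonglongrightarrow> 0"
    unfolding \<delta>_def using LIMSEQ_inverse_real_of_nat by (auto simp: inverse_eq_divide add.commute)
  define q where "q n t = dq ?g t (\<delta> n)" for n t
  define hn where "hn n t = min (q n t) (?f t)" for n t
  have q0: "q n t \<ge> 0" for n t
    unfolding q_def dq_def using mono[of t "t + \<delta> n"] \<delta>(1)[of n] by auto
  have qcont: "continuous_on UNIV (q n)" for n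
  proof -
    have c1: "continuous_on UNIV (\<lambda>t. t + \<delta> n)" by (intro continuous_intros)
    have "continuous_on UNIV (\<lambda>t. F (t + \<delta> n) w)"
      using continuous_on_compose[OF c1, of ?g] cont continuous_on_subset
      by (auto simp: o_def)
    then show ?thesis unfolding q_def dq_def using \<delta>(1)[of n]
      by (intro continuous_intros cont) auto
  qed
  have qint: "q n integrable_on {a..b}" for n
    unfolding q_def by (rule Qint_integrable[OF cont ab \<delta>(1)])
  have hmeas: "hn n \<in> borel_measurable borel" for n
  proof -
    have "q n \<in> borel_measurable borel" by (rule borel_measurable_continuous_onI[OF qcont])
    then show ?thesis unfolding hn_def using meas by measurable
  qed
  have hb: "\<bar>hn n t\<bar> \<le> 1" for n t
    unfolding hn_def using q0[of n t] bnd[of t] by auto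
  have hint: "hn n integrable_on {a..b}" for n
    by (rule borel_bounded_integrable[OF hmeas hb])
  have hconv: "(\<lambda>n. hn n t) \<longlonglongrightarrow> ?f t" for t
  proof (cases "\<exists>D. (?g has_real_derivative D) (at t)")
    case True
    then obtain D where D: "(?g has_real_derivative D) (at t)" by blast
    have "d1 F t w = D" by (rule d1_value[where F=F and w=w, OF D])
    moreover have "(\<lambda>n. q n t) \<longlonglongrightarrow> D" unfolding q_def by (rule deriv_seq[OF D \<delta>(2)]) (use \<delta>(1) in \<open>auto simp: less_imp_neq[symmetric]\<close>)
    ultimately show ?thesis unfolding hn_def using tendsto_min[of "\<lambda>n. q n t" D sequentially "\<lambda>n. D" D] by auto
  next
    case False
    then have "d1 F t w = 0" by (simp add: d1_def)
    then have "hn n t = 0" for n unfolding hn_def using q0[of n t] by auto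
    then show ?thesis using \<open>d1 F t w = 0\<close> by simp
  qed
  have one: "(\<lambda>_. 1::real) integrable_on {a..b}" by (rule integrable_const_ivl)
  have dc: "?f integrable_on {a..b}" "(\<lambda>n. integral {a..b} (hn n)) \<longlonglongrightarrow> integral {a..b} ?f"
    using dominated_convergence[of hn "{a..b}" "\<lambda>_. 1" ?f, OF hint one] hb hconv by auto
  then show "?f integrable_on {a..b}" by simp
  have le: "integral {a..b} (hn n) \<le> integral {a..b} (q n)" for n
    by (rule integral_le[OF hint qint]) (auto simp: hn_def)
  have ql: "(\<lambda>n. integral {a..b} (q n)) \<longlonglongrightarrow> ?g b - ?g a"
    unfolding q_def by (rule Qlim[OF cont ab \<delta>])
  show "integral {a..b} ?f \<le> F b w - F a w"
    using LIMSEQ_le[OF dc(2) ql] le by auto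
qed



section \<open>Right derivative of concave functions\<close>

definition cslope :: "(real \<Rightarrow> real) \<Rightarrow> real \<Rightarrow> real \<Rightarrow> real" where
  "cslope g x y = (g y - g x) / (y - x)"

definition Rd :: "(real \<Rightarrow> real) \<Rightarrow> real \<Rightarrow> real" where
  "Rd g t = (if t < 1 then Sup (cslope g t ` {t<..1}) else 0)"

locale concfun =
  fixes g :: "real \<Rightarrow> real"
  assumes conc: "concave_on {0..1} g"
    and mon: "\<And>x y. 0 \<le> x \<Longrightarrow> x \<le> y \<Longrightarrow> y \<le> 1 \<Longrightarrow> g x \<le> g y"
    and lip: "\<And>x y. 0 \<le> x \<Longrightarrow> x \<le> y \<Longrightarrow> y \<le> 1 \<Longrightarrow> g y - g x \<le> y - x"
    and cont: "continuous_on UNIV g"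
begin

lemma three_slope:
  assumes "0 \<le> x" "x < y" "y < z" "z \<le> 1"
  shows "cslope g x z \<le> cslope g x y" "cslope g y z \<le> cslope g x z"
proof -
  have cv: "convex_on {0..1} (\<lambda>x. - g x)" using conc by (simp add: concave_on_def)
  have I: "x \<in> {0..1}" "z \<in> {0..1}" using assms by auto
  note a = convex_on_slope_le[OF cv I assms(2,3)]
  have e1: "(- g x - - g y) / (x - y) = - cslope g x y" unfolding cslope_def
    using assms by (simp add: field_simps)
  have e2: "(- g x - - g z) / (x - z) = - cslope g x z" unfolding cslope_def
    using assms by (simp add: field_simps)
  have e3: "(- g y - - g z) / (y - z) = - cslope g y z" unfolding cslope_def
    using assms by (simp add: field_simps)
  show "cslope g x z \<le> cslope g x y" "cslope g y z \<le> cslope g x z"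
    using a unfolding e1 e2 e3 by auto
qed

lemma slope_bnd:
  assumes "0 \<le> x" "x < y" "y \<le> 1"
  shows "0 \<le> cslope g x y" "cslope g x y \<le> 1"
  using mon[of x y] lip[of x y] assms by (auto simp: cslope_def divide_simps)

lemma Rd_props:
  assumes "0 \<le> t" "t < 1"
  shows "bdd_above (cslope g t ` {t<..1})" "cslope g t ` {t<..1} \<noteq> {}"
    and "\<And>s. t < s \<Longrightarrow> s \<le> 1 \<Longrightarrow> cslope g t s \<le> Rd g t"
    and "Rd g t \<le> 1" "0 \<le> Rd g t"
proof -
  show bdd: "bdd_above (cslope g t ` {t<..1})"
    using slope_bnd assms by (auto intro!: bdd_aboveI[of _ 1])
  show ne: "cslope g t ` {t<..1} \<noteq> {}" using assms by auto
  show up: "cslope g t s \<le> Rd g t" if "t < s" "s \<le> 1" for s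
    unfolding Rd_def using assms that by (auto intro!: cSup_upper bdd)
  show "Rd g t \<le> 1"
    unfolding Rd_def using assms slope_bnd by (auto intro!: cSup_least ne)
  show "0 \<le> Rd g t" using up[of 1] slope_bnd[of t 1] assms by auto
qed

lemma Rd_K:
  assumes "0 \<le> t1" "t1 < t2" "t2 < 1"
  shows "Rd g t2 \<le> cslope g t1 t2" "cslope g t1 t2 \<le> Rd g t1"
proof -
  show "cslope g t1 t2 \<le> Rd g t1" using Rd_props(3)[of t1 t2] assms by auto
  have "cslope g t2 s \<le> cslope g t1 t2" if "t2 < s" "s \<le> 1" for s
    using three_slope[of t1 t2 s] assms that by auto
  then show "Rd g t2 \<le> cslope g t1 t2"
    unfolding Rd_def using assms Rd_props(2)[of t2] by (auto intro!: cSup_least)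
qed

lemma Rd_antimono:
  assumes "0 \<le> t1" "t1 \<le> t2" "t2 \<le> 1"
  shows "Rd g t2 \<le> Rd g t1"
proof (cases "t2 = 1")
  case True
  then show ?thesis using Rd_props(5)[of t1] assms by (cases "t1 = 1") (auto simp: Rd_def)
next
  case False
  then show ?thesis using Rd_K[of t1 t2] assms by (cases "t1 = t2") auto
qed

lemma Rd_bnd: "0 \<le> t \<Longrightarrow> t \<le> 1 \<Longrightarrow> 0 \<le> Rd g t \<and> Rd g t \<le> 1"
  using Rd_props(4,5)[of t] by (cases "t = 1") (auto simp: Rd_def)

lemma Rd_approx:
  assumes "0 \<le> t" "t < 1" "e > 0"
  shows "\<exists>d>0. \<forall>h. 0 < h \<and> h < d \<longrightarrow> t + h \<le> 1 \<and> Rd g t - e < cslope g t (t + h) \<and> cslope g t (t + h) \<le> Rd g t"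
proof -
  have "Rd g t - e < Sup (cslope g t ` {t<..1})" using assms by (simp add: Rd_def)
  then obtain s where s: "s \<in> {t<..1}" "Rd g t - e < cslope g t s"
    using less_cSup_iff[OF Rd_props(2,1)[OF assms(1,2)]] by auto
  show ?thesis
  proof (intro exI[of _ "s - t"] conjI allI impI)
    show "0 < s - t" using s by auto
    fix h assume h: "0 < h \<and> h < s - t"
    show "t + h \<le> 1" using h s by auto
    have "cslope g t s \<le> cslope g t (t + h)"
      using three_slope(1)[of t "t + h" s] h s assms by auto
    then show "Rd g t - e < cslope g t (t + h)" using s by auto
    show "cslope g t (t + h) \<le> Rd g t" using Rd_props(3)[of t "t + h"] h s assms by auto
  qed
qed

lemma Rd_seq:
  assumes "0 \<le> t" "t < 1" "\<And>n. \<delta> n > 0" "\<delta> \<longlonglongrightarrow> 0"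
  shows "(\<lambda>n. cslope g t (t + \<delta> n)) \<longlonglongrightarrow> Rd g t"
proof (rule LIMSEQ_I)
  fix r :: real assume r: "0 < r"
  obtain d where d: "d > 0" "\<And>h. 0 < h \<and> h < d \<Longrightarrow> t + h \<le> 1 \<and> Rd g t - r < cslope g t (t + h) \<and> cslope g t (t + h) \<le> Rd g t"
    using Rd_approx[OF assms(1,2) r] by blast
  obtain N where N: "\<And>n. n \<ge> N \<Longrightarrow> norm (\<delta> n - 0) < d"
    using LIMSEQ_D[OF assms(4) d(1)] by blast
  show "\<exists>no. \<forall>n\<ge>no. norm (cslope g t (t + \<delta> n) - Rd g t) < r"
  proof (intro exI[of _ N] allI impI)
    fix n assume "N \<le> n"
    then have "\<delta> n < d" using N[of n] assms(3)[of n] by auto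
    then show "norm (cslope g t (t + \<delta> n) - Rd g t) < r" using d(2)[of "\<delta> n"] assms(3)[of n] by auto
  qed
qed

lemma Rd_deriv:
  assumes t: "0 < t" "t < 1" and c: "isCont (Rd g) t"
  shows "(g has_real_derivative Rd g t) (at t)"
  unfolding DERIV_def LIM_eq
proof (intro allI impI)
  fix r :: real assume r: "0 < r"
  obtain d where d: "d > 0" "\<And>y. dist y t < d \<Longrightarrow> dist (Rd g y) (Rd g t) < r"
    using c r unfolding continuous_at_eps_delta by blast
  show "\<exists>s>0. \<forall>x. x \<noteq> 0 \<and> norm (x - 0) < s \<longrightarrow> norm ((g (t + x) - g t) / x - Rd g t) < r"
  proof (intro exI[of _ "min d (min t (1 - t))"] conjI allI impI)
    show "0 < min d (min t (1 - t))" using d t by auto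
    fix h :: real assume h: "h \<noteq> 0 \<and> norm (h - 0) < min d (min t (1 - t))"
    have R: "\<bar>Rd g (t + h) - Rd g t\<bar> < r" using d(2)[of "t + h"] h by (auto simp: dist_real_def)
    show "norm ((g (t + h) - g t) / h - Rd g t) < r"
    proof (cases "h > 0")
      case True
      have "Rd g (t + h) \<le> cslope g t (t + h)" "cslope g t (t + h) \<le> Rd g t"
        using Rd_K[of t "t + h"] True h t by auto
      moreover have "(g (t + h) - g t) / h = cslope g t (t + h)" by (simp add: cslope_def)
      ultimately show ?thesis using R by auto
    next
      case False
      then have hn: "h < 0" using h by auto
      have "Rd g t \<le> cslope g (t + h) t" "cslope g (t + h) t \<le> Rd g (t + h)"
        using Rd_K[of "t + h" t] hn h t by auto
      moreover have "(g (t + h) - g t) / h = cslope g (t + h) t" using hn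
        by (simp add: cslope_def divide_simps)
      ultimately show ?thesis using R by auto
    qed
  qed
qed

lemma Rd_ctble_discont: "countable {t \<in> {0<..<1}. \<not> isCont (Rd g) t}"
proof -
  have "mono_on {0<..<1} (\<lambda>t. - Rd g t)"
    by (auto intro!: mono_onI simp: Rd_antimono)
  then have "countable {a \<in> {0<..<1}. \<not> continuous (at a within {0<..<1}) (\<lambda>t. - Rd g t)}"
    by (rule mono_on_ctble_discont)
  moreover have "continuous (at a within {0<..<1}) (\<lambda>t. - Rd g t) \<longleftrightarrow> isCont (Rd g) a" if "a \<in> {0<..<1}" for a
  proof -
    have "at a within {0<..<1} = at a" by (rule at_within_open) (use that in auto)
    then show ?thesis using continuous_minus[of "at a" "\<lambda>t. - Rd g t"] continuous_minus[of "at a" "Rd g"]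
      by auto
  qed
  ultimately show ?thesis
    by (smt (verit, ccfv_SIG) Collect_cong)
qed


lemma Rd_integrable01: "Rd g integrable_on {0..1}"
proof -
  have "mono_on {0..1} (\<lambda>t. - Rd g t)" by (auto intro!: mono_onI simp: Rd_antimono)
  then have "(\<lambda>t. - Rd g t) integrable_on {0..1}" by (rule integrable_on_mono_on)
  then show ?thesis using integrable_neg by fastforce
qed

lemma Rd_ftc_lt1:
  assumes u: "0 \<le> u" "u < 1"
  shows "integral {0..u} (Rd g) = g u - g 0"
proof -
  define \<delta> where "\<delta> n = (1 - u) / (real n + 2)" for n :: nat
  have \<delta>pos: "\<delta> n > 0" for n using u by (simp add: \<delta>_def)
  have \<delta>le: "\<delta> n \<le> 1 - u" for n using u by (simp add: \<delta>_def divide_simps)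
  have \<delta>lim: "\<delta> \<longlonglongrightarrow> 0"
  proof -
    have i2: "(\<lambda>n. inverse (real n + 2)) \<longlonglongrightarrow> 0"
    proof -
      have "(\<lambda>n. inverse (real (Suc (Suc n)))) \<longlonglongrightarrow> 0"
        using LIMSEQ_Suc[OF LIMSEQ_inverse_real_of_nat] .
      moreover have "real (Suc (Suc n)) = real n + 2" for n by simp
      ultimately show ?thesis by (simp add: add.commute)
    qed
    have "(\<lambda>n. (1 - u) * inverse (real n + 2)) \<longlonglongrightarrow> (1 - u) * 0"
      by (intro tendsto_intros i2)
    moreover have "\<delta> = (\<lambda>n. (1 - u) * inverse (real n + 2))" by (auto simp: \<delta>_def divide_inverse)
    ultimately show ?thesis by simp
  qed
  define q where "q n t = dq g t (\<delta> n)" for n t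
  have qs: "q n t = cslope g t (t + \<delta> n)" for n t by (simp add: q_def dq_def cslope_def)
  have qb: "norm (q n t) \<le> 1" if "t \<in> {0..u}" for n t
    using slope_bnd[of t "t + \<delta> n"] that \<delta>pos[of n] \<delta>le[of n] u unfolding qs by auto
  have qc: "(\<lambda>n. q n t) \<longlonglongrightarrow> Rd g t" if "t \<in> {0..u}" for t
    unfolding qs by (rule Rd_seq) (use that u \<delta>pos \<delta>lim in auto)
  have qi: "q n integrable_on {0..u}" for n
    unfolding q_def by (rule Qint_integrable[OF cont _ \<delta>pos]) (use u in auto)
  have one: "(\<lambda>_. 1::real) integrable_on {0..u}" by (rule integrable_const_ivl)
  have "(\<lambda>n. integral {0..u} (q n)) \<longlonglongrightarrow> integral {0..u} (Rd g)"
    using dominated_convergence(2)[of q "{0..u}" "\<lambda>_. 1" "Rd g", OF qi one] qb qc by auto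
  moreover have "(\<lambda>n. integral {0..u} (q n)) \<longlonglongrightarrow> g u - g 0"
    unfolding q_def by (rule Qlim[OF cont _ \<delta>pos \<delta>lim]) (use u in auto)
  ultimately show ?thesis using LIMSEQ_unique by blast
qed

lemma Rd_ftc:
  assumes u: "0 \<le> u" "u \<le> 1"
  shows "integral {0..u} (Rd g) = g u - g 0"
proof (cases "u < 1")
  case True
  then show ?thesis using Rd_ftc_lt1 u by auto
next
  case False
  then have u1: "u = 1" using u by auto
  have "\<bar>integral {0..1} (Rd g) - (g 1 - g 0)\<bar> \<le> e" if e: "e > 0" for e
  proof -
    define w where "w = max 0 (1 - e / 2)"
    have w: "0 \<le> w" "w < 1" "1 - w \<le> e / 2" using e by (auto simp: w_def max_def)
    have sp: "integral {0..w} (Rd g) + integral {w..1} (Rd g) = integral {0..1} (Rd g)"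
      using Henstock_Kurzweil_Integration.integral_combine[where a=0 and c=w and b=1 and f="Rd g"] w Rd_integrable01 by auto
    have "integral {w..1} (Rd g) \<le> integral {w..1} (\<lambda>_. 1::real)"
      by (rule integral_le) (use Rd_bnd w integrable_on_subinterval[OF Rd_integrable01] in auto)
    moreover have "integral {w..1} (Rd g) \<ge> integral {w..1} (\<lambda>_. 0::real)"
      by (rule integral_le) (use Rd_bnd w integrable_on_subinterval[OF Rd_integrable01] in auto)
    ultimately have i1: "0 \<le> integral {w..1} (Rd g)" "integral {w..1} (Rd g) \<le> 1 - w"
      using w by auto
    have "g 1 - g w \<le> 1 - w" "g w \<le> g 1" using lip[of w 1] mon[of w 1] w by auto
    then show ?thesis using sp i1 Rd_ftc_lt1[OF w(1,2)] w by auto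
  qed
  then have "\<bar>integral {0..1} (Rd g) - (g 1 - g 0)\<bar> = 0"
    by (metis abs_ge_zero field_le_epsilon add.left_neutral order_antisym)
  then show ?thesis using u1 by auto
qed

lemma Rd_integrable: "0 \<le> u \<Longrightarrow> u \<le> 1 \<Longrightarrow> Rd g integrable_on {0..u}"
  using integrable_on_subinterval[OF Rd_integrable01] by auto

end



section \<open>Level sets and decreasing rearrangement\<close>

lemma null_diff_measure:
  assumes A: "A \<in> sets borel" and N: "countable N" and d: "\<And>x. x \<notin> N \<Longrightarrow> x \<in> A \<longleftrightarrow> x \<in> B"
  shows "B \<in> sets borel" "measure lborel B = measure lborel A"
proof -
  have Nn: "N \<in> null_sets lborel" using countable_imp_null_set_lborel[OF N] .
  have BN: "B \<inter> N \<in> null_sets lborel"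
    using countable_imp_null_set_lborel[OF countable_subset[OF _ N], of "B \<inter> N"] by auto
  have eq: "B = (A - N) \<union> (B \<inter> N)" using d by auto
  have "A - N \<in> sets borel" using A Nn by auto
  then show Bs: "B \<in> sets borel" using BN by (subst eq) auto
  have "AE x in lborel. x \<notin> N" using AE_not_in[OF Nn] .
  then have "AE x in lborel. x \<in> B \<longleftrightarrow> x \<in> A" by eventually_elim (use d in auto)
  then show "measure lborel B = measure lborel A"
    by (rule measure_eq_AE) (use A Bs in auto)
qed

definition lvl :: "(real \<Rightarrow> real) \<Rightarrow> real \<Rightarrow> real" where
  "lvl f s = measure lborel {x\<in>{0..1}. f x \<ge> s}"

definition good :: "(real \<Rightarrow> real) \<Rightarrow> bool" where
  "good f \<longleftrightarrow> f \<in> borel_measurable (restrict_space borel {0..1}) \<and> (\<forall>x\<in>{0..1}. 0 \<le> f x \<and> f x \<le> 1)"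

lemma good_sets:
  assumes "good f"
  shows "{x\<in>{0..1}. s \<le> f x} \<in> sets borel" "{x\<in>{0..1}. s < f x} \<in> sets borel"
proof -
  have m: "f \<in> borel_measurable (restrict_space borel {0..1})" using assms by (simp add: good_def)
  have "{x \<in> space (restrict_space borel {0..1}). s \<le> f x} \<in> sets (restrict_space borel {0..1})"
    using m by measurable
  then show "{x\<in>{0..1}. s \<le> f x} \<in> sets borel"
    by (simp add: sets_restrict_space_iff space_restrict_space)
  have "{x \<in> space (restrict_space borel {0..1}). s < f x} \<in> sets (restrict_space borel {0..1})"
    using m by measurable
  then show "{x\<in>{0..1}. s < f x} \<in> sets borel"
    by (simp add: sets_restrict_space_iff space_restrict_space)
qed

lemma fin01:
  assumes "A \<subseteq> {0..1::real}" "A \<in> sets borel"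
  shows "A \<in> fmeasurable lborel"
proof -
  have "emeasure lborel A \<le> emeasure lborel {0..1::real}" by (rule emeasure_mono) (use assms in auto)
  then have "emeasure lborel A < \<infinity>" by (simp add: le_less_trans)
  then show ?thesis using assms by (auto simp: fmeasurable_def)
qed

lemma lvl_bnd: "good f \<Longrightarrow> 0 \<le> lvl f s \<and> lvl f s \<le> 1"
proof -
  assume g: "good f"
  have "measure lborel {x\<in>{0..1}. f x \<ge> s} \<le> measure lborel {0..1::real}"
    by (rule measure_mono_fmeasurable) (use good_sets(1)[OF g, of s] fin01[of "{0..1}"] in auto)
  then show ?thesis by (simp add: lvl_def)
qed

lemma lvl_nonpos: "good f \<Longrightarrow> s \<le> 0 \<Longrightarrow> lvl f s = 1"
proof -
  assume g: "good f" and s: "s \<le> 0"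
  have "{x\<in>{0..1}. f x \<ge> s} = {0..1}" using g s by (force simp: good_def)
  then show ?thesis by (simp add: lvl_def)
qed

lemma lvl_gt1: "good f \<Longrightarrow> s > 1 \<Longrightarrow> lvl f s = 0"
proof -
  assume g: "good f" and s: "s > 1"
  have "{x\<in>{0..1}. f x \<ge> s} = {}" using g s by (force simp: good_def)
  then show ?thesis unfolding lvl_def by (simp only: measure_empty)
qed

lemma lvl_antimono:
  assumes g: "good f" and ss: "s \<le> s'"
  shows "lvl f s' \<le> lvl f s"
  unfolding lvl_def
proof (rule measure_mono_fmeasurable)
  show "{x \<in> {0..1}. s' \<le> f x} \<subseteq> {x \<in> {0..1}. s \<le> f x}" using ss by auto
  show "{x \<in> {0..1}. s' \<le> f x} \<in> sets lborel" using good_sets(1)[OF g, of s'] by simp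
  show "{x \<in> {0..1}. s \<le> f x} \<in> fmeasurable lborel"
    by (rule fin01) (use good_sets(1)[OF g, of s] in auto)
qed

lemma lvl_leftcont:
  assumes g: "good f" and t: "\<And>n. t < lvl f (s - 1 / (real n + 1))"
  shows "t \<le> lvl f s"
proof -
  define A where "A n = {x\<in>{0..1}. s - 1 / (real n + 1) \<le> f x}" for n :: nat
  have As: "range A \<subseteq> sets lborel" using good_sets(1)[OF g] unfolding A_def by auto
  have dec: "decseq A"
  proof (rule decseq_SucI)
    fix n :: nat
    have "1 / (real (Suc n) + 1) \<le> 1 / (real n + 1)" by (simp add: frac_le)
    then show "A (Suc n) \<subseteq> A n" unfolding A_def by auto
  qed
  have fin: "emeasure lborel (A i) \<noteq> \<infinity>" for i
  proof -
    have "A i \<in> fmeasurable lborel" by (rule fin01) (use good_sets(1)[OF g] in \<open>auto simp: A_def\<close>)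
    then show ?thesis by (auto simp: fmeasurable_def)
  qed
  have "(\<Inter>i. A i) = {x\<in>{0..1}. s \<le> f x}"
  proof (intro equalityI subsetI)
    fix x assume x: "x \<in> (\<Inter>i. A i)"
    then have x01: "x \<in> {0..1}" by (auto simp: A_def)
    have "s - 1 / (real n + 1) \<le> f x" for n using x by (auto simp: A_def)
    then have "s \<le> f x"
    proof -
      assume H: "\<And>n. s - 1 / (real n + 1) \<le> f x"
      have "(\<lambda>n. s - 1 / (real n + 1)) \<longlonglongrightarrow> s - 0"
        using LIMSEQ_inverse_real_of_nat by (intro tendsto_intros) (simp add: inverse_eq_divide add.commute)
      then show ?thesis using LIMSEQ_le_const2[of "\<lambda>n. s - 1 / (real n + 1)" s "f x"] H by auto
    qed
    then show "x \<in> {x\<in>{0..1}. s \<le> f x}" using x01 by auto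
  next
    fix x assume x: "x \<in> {x\<in>{0..1}. s \<le> f x}"
    have "s - 1 / (real n + 1) \<le> f x" for n :: nat
    proof -
      have "0 \<le> 1 / (real n + 1)" by simp
      moreover have "s \<le> f x" using x by simp
      ultimately show ?thesis by linarith
    qed
    then show "x \<in> (\<Inter>i. A i)" unfolding A_def using x by auto
  qed
  moreover have "(\<lambda>n. measure lborel (A n)) \<longlonglongrightarrow> measure lborel (\<Inter>i. A i)"
    by (rule Lim_measure_decseq[OF As dec fin])
  ultimately have "(\<lambda>n. lvl f (s - 1 / (real n + 1))) \<longlonglongrightarrow> lvl f s"
    by (simp add: lvl_def A_def)
  then show ?thesis using t by (intro LIMSEQ_le_const[of _ _ t]) (auto intro: less_imp_le)
qed



definition drr :: "(real \<Rightarrow> real) \<Rightarrow> real \<Rightarrow> real" where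
  "drr f t = Sup (insert 0 {s\<in>{0..1}. t < lvl f s})"

lemma drr_set: "bdd_above (insert 0 {s\<in>{0..1::real}. t < lvl f s})" "insert 0 {s\<in>{0..1::real}. t < lvl f s} \<noteq> {}"
  by (auto intro!: bdd_aboveI[of _ 1])

lemma drr_bnd: "0 \<le> drr f t \<and> drr f t \<le> 1"
  unfolding drr_def using drr_set
  by (auto intro!: cSup_upper2[of 0] cSup_least)

lemma drr_antimono: "t1 \<le> t2 \<Longrightarrow> drr f t2 \<le> drr f t1"
  unfolding drr_def
  by (rule cSup_subset_mono) (auto intro!: drr_set)

lemma drr_ge: "0 \<le> s \<Longrightarrow> s \<le> 1 \<Longrightarrow> t < lvl f s \<Longrightarrow> s \<le> drr f t"
  unfolding drr_def by (rule cSup_upper) (auto intro!: drr_set)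

lemma drr_ge_imp:
  assumes g: "good f" and s: "0 < s" and d: "s \<le> drr f t"
  shows "t \<le> lvl f s"
proof (rule lvl_leftcont[OF g])
  fix n :: nat
  let ?s' = "s - 1 / (real n + 1)"
  have "?s' < s" by simp
  then have "?s' < drr f t" using d by linarith
  then have "?s' < Sup (insert 0 {s\<in>{0..1}. t < lvl f s})" by (simp only: drr_def)
  then obtain x where x: "x \<in> insert 0 {s\<in>{0..1}. t < lvl f s}" "?s' < x"
    using less_cSup_iff[OF drr_set(2,1)] by blast
  show "t < lvl f ?s'"
  proof (cases "x = 0")
    case True
    have t1: "t < 1"
    proof (rule ccontr)
      assume "\<not> t < 1"
      then have "\<not> t < lvl f x" for x using lvl_bnd[OF g, of x] by linarith
      then have E: "{s\<in>{0..1}. t < lvl f s} = {}" by auto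
      have "drr f t = Sup (insert 0 {})" unfolding drr_def E ..
      then have "drr f t = 0" by simp
      then show False using s d by auto
    qed
    have "?s' < 0" using x True by auto
    then show ?thesis using lvl_nonpos[OF g, of ?s'] t1 by auto
  next
    case False
    then have "x \<in> {0..1}" "t < lvl f x" using x by auto
    then show ?thesis using lvl_antimono[OF g, of ?s' x] x(2) by auto
  qed
qed

lemma drr_level:
  assumes g: "good f"
  shows "{t\<in>{0..1}. s \<le> drr f t} \<in> sets borel" "measure lborel {t\<in>{0..1}. s \<le> drr f t} = lvl f s"
proof -
  have "{t\<in>{0..1}. s \<le> drr f t} \<in> sets borel \<and> measure lborel {t\<in>{0..1}. s \<le> drr f t} = lvl f s"
  proof (cases "s \<le> 0")
    case True
    then have "{t\<in>{0..1}. s \<le> drr f t} = {0..1}" using drr_bnd[of f] by (auto intro: order_trans)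
    then show ?thesis using lvl_nonpos[OF g True] by simp
  next
    case False
    show ?thesis
    proof (cases "s > 1")
      case True
      have "\<not> s \<le> drr f x" for x using drr_bnd[of f x] True by linarith
      then have E: "{t\<in>{0..1}. s \<le> drr f t} = {}" by auto
      show ?thesis unfolding E using lvl_gt1[OF g True] by simp
    next
      case False2: False
      let ?m = "lvl f s"
      have m: "0 \<le> ?m" "?m \<le> 1" using lvl_bnd[OF g] by auto
      have d: "x \<in> {0..<?m} \<longleftrightarrow> x \<in> {t\<in>{0..1}. s \<le> drr f t}" if "x \<notin> {?m}" for x
      proof
        assume "x \<in> {0..<?m}"
        then show "x \<in> {t\<in>{0..1}. s \<le> drr f t}" using drr_ge[of s x f] m False False2 by auto
      next
        assume x: "x \<in> {t\<in>{0..1}. s \<le> drr f t}"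
        then have "x \<le> ?m" using drr_ge_imp[OF g, of s x] False by auto
        then show "x \<in> {0..<?m}" using x that by auto
      qed
      have "{t\<in>{0..1}. s \<le> drr f t} \<in> sets borel" "measure lborel {t\<in>{0..1}. s \<le> drr f t} = measure lborel {0..<?m}"
        using null_diff_measure[of "{0..<?m}" "{?m}" "{t\<in>{0..1}. s \<le> drr f t}"] d by auto
      then show ?thesis using m by simp
    qed
  qed
  then show "{t\<in>{0..1}. s \<le> drr f t} \<in> sets borel" "measure lborel {t\<in>{0..1}. s \<le> drr f t} = lvl f s"
    by auto
qed

lemma drr_rearr:
  assumes g: "good f"
  shows "is_decr_rearr f (drr f)"
  unfolding is_decr_rearr_def
proof
  show "antimono_on {0..1} (drr f)"
    by (auto intro!: monotone_onI drr_antimono)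
  show "\<forall>s. measure lborel {t \<in> {0..1}. s \<le> drr f t} = measure lborel {x \<in> {0..1}. s \<le> f x}"
    using drr_level(2)[OF g] by (simp add: lvl_def)
qed



lemma antimono_good:
  assumes "\<And>x y. 0 \<le> x \<Longrightarrow> x \<le> y \<Longrightarrow> y \<le> 1 \<Longrightarrow> f y \<le> f x"
    and "\<And>x. 0 \<le> x \<Longrightarrow> x \<le> 1 \<Longrightarrow> 0 \<le> f x \<and> f x \<le> 1"
  shows "good f"
proof -
  have "mono_on {0..1} (\<lambda>x. - f x)" using assms(1) by (auto intro!: mono_onI)
  then have "(\<lambda>x. - f x) \<in> borel_measurable (restrict_space borel {0..1})"
    by (rule borel_measurable_mono_on_fnc)
  then have "(\<lambda>x. - (- f x)) \<in> borel_measurable (restrict_space borel {0..1})"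
    by measurable
  then show ?thesis using assms(2) by (auto simp: good_def)
qed

lemma drr_good: "good (drr f)"
  by (rule antimono_good) (auto simp: drr_antimono drr_bnd)

lemma restr_lborel_measurable:
  "h \<in> borel_measurable (restrict_space borel {0..1::real}) \<Longrightarrow> h \<in> borel_measurable (restrict_space lborel {0..1::real})"
  by (subst measurable_cong_sets[OF sets_restrict_space_cong[OF sets_lborel] refl]) auto

lemma HB:
  fixes h :: "real \<Rightarrow> real"
  assumes m: "h \<in> borel_measurable (restrict_space borel {0..1})"
    and b: "\<And>x. x \<in> {0..1} \<Longrightarrow> \<bar>h x\<bar> \<le> B"
  shows "h integrable_on {0..1}" "integral {0..1} h = integral\<^sup>L (restrict_space lborel {0..1}) h"
proof -
  have m2: "h \<in> borel_measurable (restrict_space lborel {0..1})" using restr_lborel_measurable[OF m] .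
  have mi: "(\<lambda>x. indicator {0..1} x *\<^sub>R h x) \<in> borel_measurable lborel"
    using m2 by (subst borel_measurable_restrict_space_iff[symmetric]) auto
  have si: "set_integrable lborel {0..1} h"
    unfolding set_integrable_def
    by (rule integrableI_bounded_set[where A="{0..1}" and B=B]) (use mi b in \<open>auto simp: indicator_def\<close>)
  show "h integrable_on {0..1}" using set_borel_integral_eq_integral(1)[OF si] .
  have "integral\<^sup>L (restrict_space lborel {0..1}) h = integral\<^sup>L lborel (\<lambda>x. indicator {0..1} x *\<^sub>R h x)"
    by (rule integral_restrict_space) auto
  also have "\<dots> = (LINT x : {0..1} | lborel. h x)" by (simp add: set_lebesgue_integral_def)
  also have "\<dots> = integral {0..1} h" using set_borel_integral_eq_integral(2)[OF si] .
  finally show "integral {0..1} h = integral\<^sup>L (restrict_space lborel {0..1}) h" by simp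
qed

lemma lvl_gt_lim:
  assumes g: "good f"
  shows "(\<lambda>n. lvl f (x + 1 / (real n + 1))) \<longlonglongrightarrow> measure lborel {t\<in>{0..1}. x < f t}"
proof -
  define A where "A n = {t\<in>{0..1}. x + 1 / (real n + 1) \<le> f t}" for n :: nat
  have As: "range A \<subseteq> sets lborel" using good_sets(1)[OF g] unfolding A_def by auto
  have inc: "incseq A"
  proof (rule incseq_SucI)
    fix n :: nat
    have "1 / (real (Suc n) + 1) \<le> 1 / (real n + 1)" by (simp add: frac_le)
    then show "A n \<subseteq> A (Suc n)" unfolding A_def by auto
  qed
  have U: "(\<Union>i. A i) = {t\<in>{0..1}. x < f t}"
  proof (intro equalityI subsetI)
    fix t assume "t \<in> (\<Union>i. A i)"
    then obtain i where i: "t \<in> A i" by auto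
    have "0 < 1 / (real i + 1)" by simp
    moreover have "x + 1 / (real i + 1) \<le> f t" "t \<in> {0..1}" using i unfolding A_def by auto
    ultimately have "x < f t" by linarith
    then show "t \<in> {t\<in>{0..1}. x < f t}" using \<open>t \<in> {0..1}\<close> by auto
  next
    fix t assume t: "t \<in> {t\<in>{0..1}. x < f t}"
    then have "f t - x > 0" by auto
    then obtain n :: nat where n: "1 / real (Suc n) < f t - x" using nat_approx_posE by blast
    then have "x + 1 / (real n + 1) \<le> f t" by (simp add: add.commute)
    then show "t \<in> (\<Union>i. A i)" using t unfolding A_def by auto
  qed
  have fin: "emeasure lborel (\<Union>i. A i) \<noteq> \<infinity>"
  proof -
    have "(\<Union>i. A i) \<in> fmeasurable lborel" unfolding U by (rule fin01) (use good_sets(2)[OF g] in auto)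
    then show ?thesis by (auto simp: fmeasurable_def)
  qed
  have "(\<lambda>n. measure lborel (A n)) \<longlonglongrightarrow> measure lborel (\<Union>i. A i)"
    by (rule Lim_measure_incseq[OF As inc fin])
  then show ?thesis unfolding U by (simp add: A_def lvl_def)
qed

lemma equi_distr:
  assumes gf: "good f" and gg: "good g" and L: "\<And>s. lvl f s = lvl g s"
  shows "distr (restrict_space lborel {0..1}) borel f = distr (restrict_space lborel {0..1}) borel g"
proof -
  let ?M = "restrict_space lborel {0..1::real}"
  have mf: "f \<in> borel_measurable ?M" using gf restr_lborel_measurable by (auto simp: good_def)
  have mg: "g \<in> borel_measurable ?M" using gg restr_lborel_measurable by (auto simp: good_def)
  have em: "emeasure (distr ?M borel h) {x<..} = emeasure lborel {t\<in>{0..1}. x < h t}"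
    if "h \<in> borel_measurable ?M" for h :: "real \<Rightarrow> real" and x :: real
  proof -
    have "emeasure (distr ?M borel h) {x<..} = emeasure ?M (h -` {x<..} \<inter> space ?M)"
      by (rule emeasure_distr[OF that]) measurable
    also have "\<dots> = emeasure lborel (h -` {x<..} \<inter> {0..1})"
      unfolding space_restrict_space space_lborel space_borel Int_UNIV_right by (rule emeasure_restrict_space) auto
    also have "h -` {x<..} \<inter> {0..1} = {t\<in>{0..1}. x < h t}" by auto
    finally show ?thesis .
  qed
  have fin: "emeasure lborel {t\<in>{0..1}. x < h t} = ennreal (measure lborel {t\<in>{0..1}. x < h t})"
    if "good h" for h :: "real \<Rightarrow> real" and x :: real
  proof -
    have "{t\<in>{0..1}. x < h t} \<in> fmeasurable lborel" by (rule fin01) (use good_sets(2)[OF that] in auto)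
    then show ?thesis by (simp add: emeasure_eq_measure2)
  qed
  have meq: "measure lborel {t\<in>{0..1}. x < f t} = measure lborel {t\<in>{0..1}. x < g t}" for x
    using LIMSEQ_unique[OF lvl_gt_lim[OF gf, of x]] lvl_gt_lim[OF gg, of x] L by simp
  show ?thesis
  proof (rule measure_eqI_lessThan)
    show "sets (distr ?M borel f) = sets borel" "sets (distr ?M borel g) = sets borel" by auto
    show "emeasure (distr ?M borel f) {x<..} < \<infinity>" for x
      unfolding em[OF mf] fin[OF gf] by simp
    show "emeasure (distr ?M borel f) {x<..} = emeasure (distr ?M borel g) {x<..}" for x
      unfolding em[OF mf] em[OF mg] fin[OF gf] fin[OF gg] meq ..
  qed
qed

lemma equi_integral:
  fixes \<phi> :: "real \<Rightarrow> real"
  assumes gf: "good f" and gg: "good g" and L: "\<And>s. lvl f s = lvl g s"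
    and \<phi>: "continuous_on UNIV \<phi>"
  shows "(\<lambda>x. \<phi> (f x)) integrable_on {0..1}" "(\<lambda>x. \<phi> (g x)) integrable_on {0..1}"
    "integral {0..1} (\<lambda>x. \<phi> (f x)) = integral {0..1} (\<lambda>x. \<phi> (g x))"
proof -
  let ?M = "restrict_space lborel {0..1::real}"
  have \<phi>m: "\<phi> \<in> borel_measurable borel" by (rule borel_measurable_continuous_onI[OF \<phi>])
  obtain B where B: "\<And>y. y \<in> {0..1} \<Longrightarrow> \<bar>\<phi> y\<bar> \<le> B"
  proof -
    have "compact (\<phi> ` {0..1::real})" by (rule compact_continuous_image) (use \<phi> continuous_on_subset in auto)
    then obtain B where "\<forall>y\<in>\<phi> ` {0..1}. norm y \<le> B" using compact_imp_bounded bounded_iff by metis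
    then show ?thesis using that by force
  qed
  have hb: "h \<in> borel_measurable (restrict_space borel {0..1}) \<Longrightarrow> (\<lambda>x. \<phi> (h x)) \<in> borel_measurable (restrict_space borel {0..1})" for h
    using \<phi>m by measurable
  have I: "(\<lambda>x. \<phi> (h x)) integrable_on {0..1} \<and> integral {0..1} (\<lambda>x. \<phi> (h x)) = integral\<^sup>L (distr ?M borel h) \<phi>"
    if gh: "good h" for h
  proof -
    have m: "h \<in> borel_measurable (restrict_space borel {0..1})" and hb01: "\<And>x. x \<in> {0..1} \<Longrightarrow> h x \<in> {0..1}"
      using gh by (auto simp: good_def)
    have bd: "\<And>x. x \<in> {0..1} \<Longrightarrow> \<bar>\<phi> (h x)\<bar> \<le> B" using B hb01 by auto
    have "integral {0..1} (\<lambda>x. \<phi> (h x)) = integral\<^sup>L ?M (\<lambda>x. \<phi> (h x))"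
      using HB(2)[OF hb[OF m] bd] .
    also have "\<dots> = integral\<^sup>L (distr ?M borel h) \<phi>"
      by (rule integral_distr[symmetric]) (use restr_lborel_measurable[OF m] \<phi>m in auto)
    finally show ?thesis using HB(1)[OF hb[OF m] bd] by simp
  qed
  show "(\<lambda>x. \<phi> (f x)) integrable_on {0..1}" "(\<lambda>x. \<phi> (g x)) integrable_on {0..1}"
    using I[OF gf] I[OF gg] by auto
  show "integral {0..1} (\<lambda>x. \<phi> (f x)) = integral {0..1} (\<lambda>x. \<phi> (g x))"
    using I[OF gf] I[OF gg] equi_distr[OF gf gg L] by simp
qed



lemma emeasure_reflect:
  assumes B: "B \<in> sets borel"
  shows "emeasure lborel {x::real. 1 - x \<in> B} = emeasure lborel B"
proof -
  have pm: "((+) (1::real)) \<in> borel_measurable borel" by (intro borel_measurable_continuous_onI continuous_intros)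
  have C: "(+) 1 -` B \<in> sets borel" using measurable_sets_borel[OF pm B] .
  have "emeasure lborel (uminus -` ((+) 1 -` B)) = emeasure (distr lborel borel uminus) ((+) 1 -` B)"
    by (subst emeasure_distr) (use C in auto)
  also have "\<dots> = emeasure lborel ((+) (1::real) -` B)" by (simp add: lborel_distr_uminus)
  also have "\<dots> = emeasure (distr lborel borel ((+) (1::real))) B"
    by (subst emeasure_distr) (use B in auto)
  also have "\<dots> = emeasure lborel B" by (simp add: lborel_distr_plus)
  finally show ?thesis by (simp add: vimage_def)
qed

lemma good_reflect: "good f \<Longrightarrow> good (\<lambda>t. f (1 - t))"
proof -
  assume g: "good f"
  have m: "f \<in> borel_measurable (restrict_space borel {0..1})" using g by (simp add: good_def)
  have r: "(\<lambda>t::real. 1 - t) \<in> restrict_space borel {0..1} \<rightarrow>\<^sub>M restrict_space borel {0..1}"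
    by (rule measurable_restrict_space3) auto
  have "(\<lambda>t. f (1 - t)) \<in> borel_measurable (restrict_space borel {0..1})"
    using measurable_compose[OF r m] by (simp add: o_def)
  then show ?thesis using g by (auto simp: good_def)
qed

lemma lvl_reflect:
  assumes g: "good f"
  shows "lvl (\<lambda>t. f (1 - t)) s = lvl f s"
proof -
  have B: "{y\<in>{0..1}. s \<le> f y} \<in> sets borel" using good_sets(1)[OF g] .
  have eq: "{x\<in>{0..1}. s \<le> f (1 - x)} = {x. 1 - x \<in> {y\<in>{0..1}. s \<le> f y}}" by auto
  show ?thesis unfolding lvl_def measure_def eq emeasure_reflect[OF B] ..
qed

lemma drr_reflect: "good f \<Longrightarrow> drr (\<lambda>t. f (1 - t)) = drr f"
  by (simp add: drr_def lvl_reflect fun_eq_iff)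

lemma good_integrable: "good f \<Longrightarrow> f integrable_on {0..1}"
  by (rule HB(1)[of f 1]) (auto simp: good_def)

lemma good_integrable_sub: "good f \<Longrightarrow> 0 \<le> a \<Longrightarrow> b \<le> 1 \<Longrightarrow> f integrable_on {a..b}"
  using integrable_on_subinterval[OF good_integrable] by auto

lemma antimono_ctble_discont:
  fixes p :: "real \<Rightarrow> real"
  assumes "\<And>x y. 0 \<le> x \<Longrightarrow> x \<le> y \<Longrightarrow> y \<le> 1 \<Longrightarrow> p y \<le> p x"
  shows "countable {t \<in> {0<..<1}. \<not> isCont p t}"
proof -
  have "mono_on {0<..<1} (\<lambda>t. - p t)" using assms by (auto intro!: mono_onI)
  then have "countable {a \<in> {0<..<1}. \<not> continuous (at a within {0<..<1}) (\<lambda>t. - p t)}"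
    by (rule mono_on_ctble_discont)
  moreover have "continuous (at a within {0<..<1}) (\<lambda>t. - p t) \<longleftrightarrow> isCont p a" if "a \<in> {0<..<1}" for a
  proof -
    have "at a within {0<..<1} = at a" by (rule at_within_open) (use that in auto)
    then show ?thesis using continuous_minus[of "at a" "\<lambda>t. - p t"] continuous_minus[of "at a" "p"]
      by auto
  qed
  ultimately show ?thesis
    by (smt (verit, ccfv_SIG) Collect_cong)
qed

lemma indef_deriv:
  assumes g: "good p" and x: "0 < x" "x < 1" and c: "isCont p x"
  shows "((\<lambda>y. integral {0..y} p) has_real_derivative p x) (at x)"
proof -
  have "((\<lambda>y. integral {0..y} p) has_vector_derivative p x) (at x within ({0..1} - {}))"
    by (rule integral_has_vector_derivative_continuous_at[OF good_integrable[OF g]])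
       (use x c continuous_at_imp_continuous_within in auto)
  moreover have "at x within ({0..1} - {}) = at x" by (rule at_within_interior) (use x in auto)
  ultimately show ?thesis by (simp add: has_real_derivative_iff_has_vector_derivative)
qed

lemma int_eq_imp_lvl_eq:
  assumes gp: "good p" and gq: "good q"
    and ap: "\<And>x y. 0 \<le> x \<Longrightarrow> x \<le> y \<Longrightarrow> y \<le> 1 \<Longrightarrow> p y \<le> p x"
    and aq: "\<And>x y. 0 \<le> x \<Longrightarrow> x \<le> y \<Longrightarrow> y \<le> 1 \<Longrightarrow> q y \<le> q x"
    and I: "\<And>x. 0 < x \<Longrightarrow> x < 1 \<Longrightarrow> integral {0..x} p = integral {0..x} q"
  shows "lvl p s = lvl q s"
proof -
  define N where "N = {t \<in> {0<..<1}. \<not> isCont p t} \<union> {t \<in> {0<..<1}. \<not> isCont q t} \<union> {0, 1}"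
  have N: "countable N" unfolding N_def using antimono_ctble_discont[OF ap] antimono_ctble_discont[OF aq] by auto
  have eq: "p x = q x" if "x \<in> {0..1}" "x \<notin> N" for x
  proof -
    have x: "0 < x" "x < 1" "isCont p x" "isCont q x" using that by (auto simp: N_def)
    have dp: "((\<lambda>y. integral {0..y} p) has_real_derivative p x) (at x)" by (rule indef_deriv[OF gp x(1,2,3)])
    have dq: "((\<lambda>y. integral {0..y} q) has_real_derivative q x) (at x)" by (rule indef_deriv[OF gq x(1,2,4)])
    have "((\<lambda>y. integral {0..y} q) has_real_derivative p x) (at x)"
      by (rule has_field_derivative_transform_within_open[OF dp, of "{0<..<1}"]) (use x I in auto)
    then show ?thesis using dq DERIV_unique by blast
  qed
  have "{x\<in>{0..1}. s \<le> p x} \<in> sets borel" using good_sets(1)[OF gp] .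
  then have "measure lborel {x\<in>{0..1}. s \<le> q x} = measure lborel {x\<in>{0..1}. s \<le> p x}"
    by (rule null_diff_measure(2)[OF _ N]) (use eq in auto)
  then show ?thesis by (simp add: lvl_def)
qed

lemma hardy_littlewood:
  assumes g: "good f" and ab: "0 \<le> a" "a \<le> b" "b \<le> 1"
  shows "integral {a..b} f \<le> integral {0..b-a} (drr f)"
proof -
  define c where "c = b - a"
  have c: "0 \<le> c" "c \<le> 1" using ab by (auto simp: c_def)
  define s0 where "s0 = drr f c"
  define \<phi> where "\<phi> y = max (y - s0) 0" for y :: real
  have \<phi>c: "continuous_on UNIV \<phi>" unfolding \<phi>_def by (intro continuous_intros)
  have L: "lvl f s = lvl (drr f) s" for s using drr_level(2)[OF g, of s] by (simp add: lvl_def)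
  note E = equi_integral[OF g drr_good L \<phi>c]
  have fi: "f integrable_on {a..b}" using good_integrable_sub[OF g] ab by auto
  have \<phi>fi: "(\<lambda>x. \<phi> (f x)) integrable_on {a..b}" using integrable_on_subinterval[OF E(1)] ab by auto
  have "integral {a..b} f \<le> integral {a..b} (\<lambda>x. \<phi> (f x) + s0)"
    by (rule integral_le[OF fi]) (use integrable_add[OF \<phi>fi integrable_const_ivl[of s0 a b]] in \<open>auto simp: \<phi>_def\<close>)
  also have "\<dots> = integral {a..b} (\<lambda>x. \<phi> (f x)) + s0 * c"
    using integral_add[OF \<phi>fi integrable_const_ivl[of s0 a b]] ab by (simp add: c_def mult.commute)
  also have "integral {a..b} (\<lambda>x. \<phi> (f x)) \<le> integral {0..1} (\<lambda>x. \<phi> (f x))"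
    by (rule integral_subset_le) (use ab \<phi>fi E(1) in \<open>auto simp: \<phi>_def\<close>)
  also have "integral {0..1} (\<lambda>x. \<phi> (f x)) = integral {0..1} (\<lambda>x. \<phi> (drr f x))" by (rule E(3))
  also have "\<dots> = integral {0..c} (\<lambda>x. \<phi> (drr f x)) + integral {c..1} (\<lambda>x. \<phi> (drr f x))"
    using Henstock_Kurzweil_Integration.integral_combine[where a=0 and c=c and b=1 and f="\<lambda>x. \<phi> (drr f x)"] c E(2) by auto
  also have "integral {c..1} (\<lambda>x. \<phi> (drr f x)) = integral {c..1} (\<lambda>x. 0)"
    by (rule integral_cong) (auto simp: \<phi>_def s0_def drr_antimono)
  also have "integral {0..c} (\<lambda>x. \<phi> (drr f x)) = integral {0..c} (\<lambda>x. drr f x - s0)"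
    by (rule integral_cong) (auto simp: \<phi>_def s0_def drr_antimono)
  also have "integral {0..c} (\<lambda>x. drr f x - s0) = integral {0..c} (drr f) - s0 * c"
    using integral_diff[OF good_integrable_sub[OF drr_good, of 0 c f] integrable_const_ivl[of s0 0 c]] c by (simp add: mult.commute)
  finally show ?thesis by (simp add: c_def)
qed



section \<open>Copula-specific facts about the partial derivative\<close>

definition fc :: "(real \<Rightarrow> real \<Rightarrow> real) \<Rightarrow> real \<Rightarrow> real \<Rightarrow> real" where
  "fc D v t = d1 (cext D) t v"

lemma cext_sec_cont:
  assumes "copula D"
  shows "continuous_on UNIV (\<lambda>s. cext D s v)"
proof -
  have c: "continuous_on UNIV (\<lambda>s::real. (s, v))" by (intro continuous_intros)
  have "continuous_on ((\<lambda>s::real. (s, v)) ` UNIV) (\<lambda>z. cext D (fst z) (snd z))"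
    by (rule continuous_on_subset[OF cext_cont[OF assms]]) simp
  from continuous_on_compose[OF c this] show ?thesis by (simp add: o_def)
qed

lemma cext_sec_mono:
  assumes "copula D" "x \<le> y"
  shows "cext D x v \<le> cext D y v"
  unfolding cext_def by (rule cop_mono1[OF assms(1)]) (use assms clamp_mono clamp_in in auto)

lemma cext_sec_lip:
  assumes "copula D" "x \<le> y"
  shows "cext D y v - cext D x v \<le> y - x"
proof -
  have "cext D y v - cext D x v \<le> clamp y - clamp x"
    unfolding cext_def by (rule cop_lip1[OF assms(1)]) (use assms clamp_mono clamp_in in auto)
  also have "\<dots> \<le> y - x" using clamp_lip[of y x] clamp_mono[OF assms(2)] assms(2) by (simp add: abs_if split: if_splits)
  finally show ?thesis .
qed

lemma frac01: "0 \<le> a \<Longrightarrow> a \<le> h \<Longrightarrow> 0 < h \<Longrightarrow> 0 \<le> a / h \<and> a / h \<le> (1::real)"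
  by (simp add: divide_le_eq_1_pos)

lemma fc_bnd:
  assumes "copula D"
  shows "0 \<le> fc D v t \<and> fc D v t \<le> 1"
proof (cases "\<exists>D'. ((\<lambda>s. cext D s v) has_real_derivative D') (at t)")
  case True
  then obtain D' where D': "((\<lambda>s. cext D s v) has_real_derivative D') (at t)" by blast
  have val: "fc D v t = D'" unfolding fc_def by (rule d1_value[where F="cext D" and w=v, OF D'])
  have L: "(\<lambda>n. dq (\<lambda>s. cext D s v) t (1 / (real n + 1))) \<longlonglongrightarrow> D'" by (rule deriv_imp_seq[OF D'])
  have b: "0 \<le> dq (\<lambda>s. cext D s v) t (1 / (real n + 1)) \<and> dq (\<lambda>s. cext D s v) t (1 / (real n + 1)) \<le> 1" for n
  proof -
    have h: "1 / (real n + 1) > 0" by simp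
    have "0 \<le> cext D (t + 1 / (real n + 1)) v - cext D t v" using cext_sec_mono[OF assms, of t "t + 1 / (real n + 1)" v] h by auto
    moreover have "cext D (t + 1 / (real n + 1)) v - cext D t v \<le> 1 / (real n + 1)"
      using cext_sec_lip[OF assms, of t "t + 1 / (real n + 1)" v] h by auto
    ultimately show ?thesis unfolding dq_def using h frac01 by blast
  qed
  have "0 \<le> D'" using LIMSEQ_le_const[OF L] b by auto
  moreover have "D' \<le> 1" using LIMSEQ_le_const2[OF L] b by auto
  ultimately show ?thesis using val by auto
next
  case False
  then show ?thesis by (simp add: fc_def d1_def)
qed

lemma fc_pair_measurable:
  assumes "copula D"
  shows "(\<lambda>z. fc D (snd z) (fst z)) \<in> borel_measurable borel"
  unfolding fc_def using d1_measurable_pair[OF cext_cont[OF assms]] by simp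

lemma fc_measurable:
  assumes "copula D"
  shows "fc D v \<in> borel_measurable borel"
proof -
  have p: "(\<lambda>t::real. (t, v)) \<in> borel \<rightarrow>\<^sub>M borel" by measurable
  have "(\<lambda>t. (\<lambda>z. fc D (snd z) (fst z)) (t, v)) \<in> borel_measurable borel"
    using measurable_compose[OF p fc_pair_measurable[OF assms]] by (simp add: o_def)
  then show ?thesis by (simp add: fun_eq_iff)
qed

lemma fc_good:
  assumes "copula D"
  shows "good (fc D v)"
  unfolding good_def using fc_bnd[OF assms] measurable_restrict_space1[OF fc_measurable[OF assms]] by auto

lemma d1_local:
  assumes "open S" "t \<in> S" "\<And>s. s \<in> S \<Longrightarrow> F s w = G s w"
  shows "d1 F t w = d1 G t w"
proof -
  have "((\<lambda>s. F s w) has_real_derivative X) (at t) \<longleftrightarrow> ((\<lambda>s. G s w) has_real_derivative X) (at t)" for X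
  proof
    assume "((\<lambda>s. F s w) has_real_derivative X) (at t)"
    then show "((\<lambda>s. G s w) has_real_derivative X) (at t)"
      by (rule has_field_derivative_transform_within_open[OF _ assms(1,2)]) (rule assms(3))
  next
    assume "((\<lambda>s. G s w) has_real_derivative X) (at t)"
    then show "((\<lambda>s. F s w) has_real_derivative X) (at t)"
      by (rule has_field_derivative_transform_within_open[OF _ assms(1,2)]) (rule assms(3)[symmetric])
  qed
  then show ?thesis unfolding d1_def by simp
qed

lemma d1_eq_fc:
  assumes "t \<in> {0<..<1}" "v \<in> {0..1}"
  shows "d1 D t v = fc D v t"
  unfolding fc_def by (rule d1_local[of "{0<..<1}"]) (use assms in \<open>auto simp: cext_eq\<close>)

lemma transfer01:
  fixes h f :: "real \<Rightarrow> real"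
  assumes gf: "good f" and eq: "\<And>t. t \<in> {0<..<1} \<Longrightarrow> h t = f t"
  shows "{x\<in>{0..1}. s \<le> h x} \<in> sets borel" "lvl h s = lvl f s"
proof -
  have N: "countable {0::real, 1}" by simp
  have d: "x \<in> {x\<in>{0..1}. s \<le> f x} \<longleftrightarrow> x \<in> {x\<in>{0..1}. s \<le> h x}" if "x \<notin> {0,1}" for x
  proof (cases "x \<in> {0<..<1}")
    case True
    then have "h x = f x" by (rule eq)
    then show ?thesis using True by simp
  next
    case False
    then have "x \<notin> {0..1}" using that by auto
    then show ?thesis by blast
  qed
  have A: "{x\<in>{0..1}. s \<le> f x} \<in> sets borel" by (rule good_sets(1)[OF gf])
  show "{x\<in>{0..1}. s \<le> h x} \<in> sets borel" by (rule null_diff_measure(1)[OF A N d])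
  have "measure lborel {x\<in>{0..1}. s \<le> h x} = measure lborel {x\<in>{0..1}. s \<le> f x}"
    by (rule null_diff_measure(2)[OF A N d])
  then show "lvl h s = lvl f s" by (simp only: lvl_def)
qed

lemma rearr_transfer:
  assumes "\<And>s. lvl h s = lvl f s"
  shows "is_decr_rearr h r \<longleftrightarrow> is_decr_rearr f r"
  unfolding is_decr_rearr_def lvl_def[symmetric] using assms by (simp only: )

lemma integral_transfer01:
  fixes h f :: "real \<Rightarrow> real"
  assumes eq: "\<And>t. t \<in> {0<..<1} \<Longrightarrow> h t = f t" and ab: "0 \<le> a" "b \<le> 1"
  shows "integral {a..b} h = integral {a..b} f" "h integrable_on {a..b} \<longleftrightarrow> f integrable_on {a..b}"
proof -
  have neg: "negligible {0::real, 1}" by simp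
  have e: "f x = h x" if "x \<in> {a..b} - {0, 1}" for x
  proof -
    have "a \<le> x" "x \<le> b" "x \<noteq> 0" "x \<noteq> 1" using that by auto
    then have "x \<in> {0<..<1}" using ab by auto
    then show ?thesis using eq by simp
  qed
  have e2: "h x = f x" if "x \<in> {a..b} - {0, 1}" for x using e[OF that] by simp
  show "integral {a..b} h = integral {a..b} f" by (rule integral_spike[OF neg e])
  show "h integrable_on {a..b} \<longleftrightarrow> f integrable_on {a..b}"
  proof
    assume "h integrable_on {a..b}"
    then show "f integrable_on {a..b}" by (rule integrable_spike[OF _ neg e])
  next
    assume "f integrable_on {a..b}"
    then show "h integrable_on {a..b}" by (rule integrable_spike[OF _ neg e2])
  qed
qed



definition reflc :: "(real \<Rightarrow> real \<Rightarrow> real) \<Rightarrow> real \<Rightarrow> real \<Rightarrow> real" where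
  "reflc D u v = v - D (1 - u) v"

lemma reflc_reflc: "reflc (reflc D) = D"
  by (simp add: reflc_def fun_eq_iff)

lemma copula_reflc:
  assumes c: "copula D"
  shows "copula (reflc D)"
  unfolding copula_def
proof (intro conjI ballI impI)
  fix u v :: real assume u: "u \<in> {0..1}" and v: "v \<in> {0..1}"
  have "D (1 - u) v \<le> D 1 v" by (rule cop_mono1[OF c]) (use u v in auto)
  moreover have "0 \<le> D (1 - u) v" using cop_range[OF c, of "1 - u" v] u v by auto
  ultimately show "reflc D u v \<in> {0..1}" using cop_1v[OF c v] v by (auto simp: reflc_def)
next
  fix u :: real assume u: "u \<in> {0..1}"
  show "reflc D u 0 = 0" using cop_u0[OF c, of "1 - u"] u by (simp add: reflc_def)
  show "reflc D 0 u = 0" using cop_1v[OF c u] by (simp add: reflc_def)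
  show "reflc D u 1 = u" using cop_u1[OF c, of "1 - u"] u by (simp add: reflc_def)
  show "reflc D 1 u = u" using cop_0v[OF c u] by (simp add: reflc_def)
next
  fix u1 u2 v1 v2 :: real
  assume h: "u1 \<in> {0..1}" "u2 \<in> {0..1}" "v1 \<in> {0..1}" "v2 \<in> {0..1}" "u1 \<le> u2" "v1 \<le> v2"
  have "0 \<le> D (1 - u1) v2 - D (1 - u1) v1 - D (1 - u2) v2 + D (1 - u2) v1"
    by (rule cop_rect[OF c]) (use h in auto)
  then show "0 \<le> reflc D u2 v2 - reflc D u2 v1 - reflc D u1 v2 + reflc D u1 v1"
    by (simp add: reflc_def)
qed

lemma deriv_reflc:
  assumes "((\<lambda>s. F s v) has_real_derivative X) (at (1 - t))"
  shows "((\<lambda>s. reflc F s v) has_real_derivative X) (at t)"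
proof -
  have "((\<lambda>s. F (1 - s) v) has_real_derivative X * (-1)) (at t)"
    by (rule DERIV_chain2[where f="\<lambda>s. F s v" and g="\<lambda>s. 1 - s", OF assms]) (auto intro!: derivative_eq_intros)
  then have "((\<lambda>s. v - F (1 - s) v) has_real_derivative 0 - X * (-1)) (at t)"
    by (intro derivative_intros)
  then show ?thesis by (simp add: reflc_def)
qed

lemma d1_reflc: "d1 (reflc F) t v = d1 F (1 - t) v"
proof (cases "\<exists>X. ((\<lambda>s. F s v) has_real_derivative X) (at (1 - t))")
  case True
  then obtain X where X: "((\<lambda>s. F s v) has_real_derivative X) (at (1 - t))" by blast
  show ?thesis using d1_value[where F="reflc F" and w=v, OF deriv_reflc[where F=F and v=v, OF X]] d1_value[where F=F and w=v, OF X]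
    by simp
next
  case False
  have "\<not> (\<exists>X. ((\<lambda>s. reflc F s v) has_real_derivative X) (at t))"
  proof
    assume "\<exists>X. ((\<lambda>s. reflc F s v) has_real_derivative X) (at t)"
    then obtain X where X: "((\<lambda>s. reflc F s v) has_real_derivative X) (at (1 - (1 - t)))" by auto
    have "((\<lambda>s. reflc (reflc F) s v) has_real_derivative X) (at (1 - t))" by (rule deriv_reflc[where F="reflc F" and v=v, OF X])
    then show False using False by (auto simp: reflc_reflc)
  qed
  then show ?thesis using False by (simp add: d1_def)
qed

lemma SD_reflc:
  assumes "SD D"
  shows "SI (reflc D)"
  unfolding SI_def
proof
  fix v :: real assume v: "v \<in> {0..1}"
  have cv: "convex_on {0..1} (\<lambda>u. D u v)" using assms v by (simp add: SD_def)
  show "concave_on {0..1} (\<lambda>u. reflc D u v)"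
    unfolding concave_on_iff
  proof (intro conjI ballI allI impI)
    show "convex {0..1::real}" by simp
    fix x y :: real and a b :: real
    assume xy: "x \<in> {0..1}" "y \<in> {0..1}" and ab: "0 \<le> a" "0 \<le> b" "a + b = 1"
    have "D (a *\<^sub>R (1 - x) + b *\<^sub>R (1 - y)) v \<le> a * D (1 - x) v + b * D (1 - y) v"
      using cv[unfolded convex_on_def] xy ab by auto
    moreover have "a *\<^sub>R (1 - x) + b *\<^sub>R (1 - y) = 1 - (a *\<^sub>R x + b *\<^sub>R y)"
      using ab by (simp add: algebra_simps)
    ultimately have "D (1 - (a *\<^sub>R x + b *\<^sub>R y)) v \<le> a * D (1 - x) v + b * D (1 - y) v" by simp
    moreover have "a * v + b * v = v" using ab by (metis distrib_right mult_1)
    ultimately show "a * reflc D x v + b * reflc D y v \<le> reflc D (a *\<^sub>R x + b *\<^sub>R y) v"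
      unfolding reflc_def by (simp add: algebra_simps)
  qed
qed

lemma lvl_reflect_gen:
  assumes B: "{y\<in>{0..1}. s \<le> f y} \<in> sets borel"
  shows "lvl (\<lambda>t. f (1 - t)) s = lvl f s"
proof -
  have eq: "{x\<in>{0..1}. s \<le> f (1 - x)} = {x. 1 - x \<in> {y\<in>{0..1}. s \<le> f y}}" by auto
  show ?thesis unfolding lvl_def measure_def eq emeasure_reflect[OF B] ..
qed

lemma d1_sets:
  assumes c: "copula D" and v: "v \<in> {0..1}"
  shows "{x\<in>{0..1}. s \<le> d1 D x v} \<in> sets borel" "lvl (\<lambda>t. d1 D t v) s = lvl (fc D v) s"
  using transfer01[OF fc_good[OF c, of v], of "\<lambda>t. d1 D t v" s] d1_eq_fc[OF _ v] by auto

lemma lvl_d1_reflc: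
  assumes c: "copula D" and v: "v \<in> {0..1}"
  shows "lvl (\<lambda>t. d1 (reflc D) t v) s = lvl (\<lambda>t. d1 D t v) s"
  unfolding d1_reflc by (rule lvl_reflect_gen[OF d1_sets(1)[OF c v]])



lemma concave_on_cong01:
  assumes "concave_on {0..1} f" "\<And>x. x \<in> {0..1} \<Longrightarrow> g x = f x"
  shows "concave_on {0..1::real} g"
  unfolding concave_on_iff
proof (intro conjI ballI allI impI)
  show "convex {0..1::real}" by simp
  fix x y a b :: real assume xy: "x \<in> {0..1}" "y \<in> {0..1}" and ab: "0 \<le> a" "0 \<le> b" "a + b = 1"
  have p: "a *\<^sub>R x + b *\<^sub>R y \<in> {0..1}" using convexD[OF convex_real_interval(5)[of 0 1] xy ab] by simp
  have "a * f x + b * f y \<le> f (a *\<^sub>R x + b *\<^sub>R y)" using assms(1) xy ab by (auto simp: concave_on_iff)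
  then show "a * g x + b * g y \<le> g (a *\<^sub>R x + b *\<^sub>R y)" using assms(2) xy p by simp
qed

definition schur_eq1 :: "(real \<Rightarrow> real \<Rightarrow> real) \<Rightarrow> (real \<Rightarrow> real \<Rightarrow> real) \<Rightarrow> bool" where
  "schur_eq1 E D \<longleftrightarrow> (\<forall>v\<in>{0..1}. \<forall>fs gs. is_decr_rearr (\<lambda>t. d1 E t v) fs \<longrightarrow> is_decr_rearr (\<lambda>t. d1 D t v) gs \<longrightarrow>
      (\<forall>x\<in>{0<..<1}. integral {0..x} fs = integral {0..x} gs))"

lemma d1S_eq_schur: "d1S_eq E D \<Longrightarrow> schur_eq1 E D"
  unfolding d1S_eq_def d1S_le_def schur_le_def schur_eq1_def
  by (metis order_antisym)

lemma schur_eq1_reflc: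
  assumes cE: "copula E" and cD: "copula D" and S: "schur_eq1 E D"
  shows "schur_eq1 (reflc E) (reflc D)"
  unfolding schur_eq1_def
proof (intro ballI allI impI)
  fix v x :: real and fs gs :: "real \<Rightarrow> real" assume v: "v \<in> {0..1}" and fs: "is_decr_rearr (\<lambda>t. d1 (reflc E) t v) fs"
    and gs: "is_decr_rearr (\<lambda>t. d1 (reflc D) t v) gs" and x: "x \<in> {0<..<1}"
  have fs': "is_decr_rearr (\<lambda>t. d1 E t v) fs"
    using fs rearr_transfer[OF lvl_d1_reflc[OF cE v]] by blast
  have gs': "is_decr_rearr (\<lambda>t. d1 D t v) gs"
    using gs rearr_transfer[OF lvl_d1_reflc[OF cD v]] by blast
  show "integral {0..x} fs = integral {0..x} gs" using S fs' gs' v x unfolding schur_eq1_def by blast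
qed

lemma SI_concfun:
  assumes cE: "copula E" and SI: "SI E" and v: "v \<in> {0..1}"
  shows "concfun (\<lambda>s. cext E s v)"
proof
  show "concave_on {0..1} (\<lambda>s. cext E s v)"
    by (rule concave_on_cong01[of "\<lambda>u. E u v"]) (use SI v cext_eq in \<open>auto simp: SI_def\<close>)
  show "cext E x v \<le> cext E y v" if "0 \<le> x" "x \<le> y" "y \<le> 1" for x y
    using cext_sec_mono[OF cE, of x y v] that by auto
  show "cext E y v - cext E x v \<le> y - x" if "0 \<le> x" "x \<le> y" "y \<le> 1" for x y
    using cext_sec_lip[OF cE, of x y v] that by auto
  show "continuous_on UNIV (\<lambda>s. cext E s v)" by (rule cext_sec_cont[OF cE])
qed

lemma main_lemma:
  assumes cD: "copula D" and cE: "copula E" and SI: "SI E" and S: "schur_eq1 E D" and v: "v \<in> {0..1}"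
  shows "\<And>s. lvl (fc D v) s = lvl (fc E v) s"
    and "\<And>u. u \<in> {0..1} \<Longrightarrow> E u v = integral {0..u} (drr (fc D v))"
    and "\<And>u. u \<in> {0..1} \<Longrightarrow> D u v \<le> E u v"
proof -
  let ?f = "fc D v" and ?a = "fc E v" and ?g = "\<lambda>s. cext E s v"
  interpret cf: concfun ?g by (rule SI_concfun[OF cE SI v])
  let ?R = "Rd ?g"
  have Ranti: "\<And>x y. 0 \<le> x \<Longrightarrow> x \<le> y \<Longrightarrow> y \<le> 1 \<Longrightarrow> ?R y \<le> ?R x" using cf.Rd_antimono by blast
  have gR: "good ?R" by (rule antimono_good) (use cf.Rd_antimono cf.Rd_bnd in auto)
  have gf: "good ?f" by (rule fc_good[OF cD])
  define N where "N = {t \<in> {0<..<1}. \<not> isCont ?R t} \<union> {0, 1}"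
  have N: "countable N" unfolding N_def using cf.Rd_ctble_discont by auto
  have aR: "?a t = ?R t" if "t \<in> {0..1}" "t \<notin> N" for t
  proof -
    have t: "0 < t" "t < 1" "isCont ?R t" using that by (auto simp: N_def)
    show ?thesis unfolding fc_def by (rule d1_value[where F="cext E" and w=v, OF cf.Rd_deriv[OF t]])
  qed
  have lvl_aR: "lvl ?a s = lvl ?R s" for s
  proof -
    have "measure lborel {x\<in>{0..1}. s \<le> ?a x} = measure lborel {x\<in>{0..1}. s \<le> ?R x}"
      by (rule null_diff_measure(2)[OF good_sets(1)[OF gR] N]) (use aR in auto)
    then show ?thesis by (simp only: lvl_def)
  qed
  have rE: "is_decr_rearr (\<lambda>t. d1 E t v) ?R"
  proof -
    have "is_decr_rearr ?R ?R" unfolding is_decr_rearr_def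
      by (auto intro!: monotone_onI Ranti)
    moreover have "lvl (\<lambda>t. d1 E t v) s = lvl ?R s" for s using d1_sets(2)[OF cE v] lvl_aR by simp
    ultimately show ?thesis using rearr_transfer by blast
  qed
  have rD: "is_decr_rearr (\<lambda>t. d1 D t v) (drr ?f)"
    using drr_rearr[OF gf] rearr_transfer[OF d1_sets(2)[OF cD v]] by blast
  have I: "integral {0..x} ?R = integral {0..x} (drr ?f)" if "0 < x" "x < 1" for x
    using S rE rD v that unfolding schur_eq1_def by auto
  have lRd: "lvl (drr ?f) s = lvl ?R s" for s
    by (rule int_eq_imp_lvl_eq[OF drr_good gR _ Ranti]) (use drr_antimono I in auto)
  have lfd: "lvl ?f s = lvl (drr ?f) s" for s using drr_level(2)[OF gf, of s] by (simp add: lvl_def)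
  show lfa: "lvl ?f s = lvl ?a s" for s using lfd lRd lvl_aR by simp
  have idc: "continuous_on UNIV (\<lambda>y::real. y)" by (rule continuous_on_id)
  have E01: "integral {0..1} ?R = integral {0..1} (drr ?f)"
    using equi_integral(3)[OF gR drr_good _ idc] lRd by simp
  have g0: "?g 0 = 0" using cext_eq[of 0 v E] cop_0v[OF cE v] v by simp
  have Eu: "E u v = integral {0..u} (drr ?f)" if u: "u \<in> {0..1}" for u
  proof -
    have "E u v = ?g u - ?g 0" using cext_eq[of u v E] u v g0 by simp
    also have "\<dots> = integral {0..u} ?R" using cf.Rd_ftc u by simp
    also have "\<dots> = integral {0..u} (drr ?f)"
    proof (cases "u = 0")
      case True then show ?thesis by simp
    next
      case False
      show ?thesis
      proof (cases "u = 1")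
        case True then show ?thesis using E01 by simp
      next
        case False2: False
        then show ?thesis using I[of u] u False by auto
      qed
    qed
    finally show ?thesis .
  qed
  then show "\<And>u. u \<in> {0..1} \<Longrightarrow> E u v = integral {0..u} (drr ?f)" by blast
  have Du: "D u v = integral {0..u} ?f" if u: "u \<in> {0..1}" for u
  proof -
    have cD': "continuous_on UNIV (\<lambda>s. cext D s v)" by (rule cext_sec_cont[OF cD])
    have mD: "\<And>x y. x \<le> y \<Longrightarrow> cext D x v \<le> cext D y v" using cext_sec_mono[OF cD] by blast
    have meas: "(\<lambda>t. d1 (cext D) t v) \<in> borel_measurable borel"
      using fc_measurable[OF cD, of v] by (simp add: fc_def[abs_def])
    have bnd: "\<And>t. 0 \<le> d1 (cext D) t v \<and> d1 (cext D) t v \<le> 1" using fc_bnd[OF cD, of v] by (simp add: fc_def)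
    note F = fatou_deriv[OF cD' mD meas bnd]
    have i1: "integral {0..u} ?f \<le> D u v"
      using F(2)[of 0 u] u cext_eq[of u v D] cext_eq[of 0 v D] cop_0v[OF cD v] v by (simp add: fc_def[abs_def])
    have i2: "integral {u..1} ?f \<le> v - D u v"
      using F(2)[of u 1] u cext_eq[of u v D] cext_eq[of 1 v D] cop_1v[OF cD v] v by (simp add: fc_def[abs_def])
    have "integral {0..1} ?f = integral {0..1} (drr ?f)"
      using equi_integral(3)[OF gf drr_good _ idc] lfd by simp
    also have "\<dots> = E 1 v" using Eu[of 1] by simp
    also have "\<dots> = v" using cop_1v[OF cE v] .
    finally have i3: "integral {0..1} ?f = v" .
    have "integral {0..u} ?f + integral {u..1} ?f = integral {0..1} ?f"
      using Henstock_Kurzweil_Integration.integral_combine[where a=0 and c=u and b=1 and f="?f"] u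
        good_integrable[OF gf] by auto
    then show ?thesis using i1 i2 i3 by linarith
  qed
  show "D u v \<le> E u v" if u: "u \<in> {0..1}" for u
    using Du[OF u] Eu[OF u] hardy_littlewood[OF gf, of 0 u] u by auto
qed

lemma xi_v:
  assumes cD: "copula D" and cE: "copula E" and L: "\<And>s. lvl (fc D v) s = lvl (fc E v) s"
  shows "integral {0..1} (\<lambda>t. (fc D v t)\<^sup>2) = integral {0..1} (\<lambda>t. (fc E v t)\<^sup>2)"
proof -
  have c: "continuous_on UNIV (\<lambda>y::real. y\<^sup>2)" by (intro continuous_intros)
  show ?thesis using equi_integral(3)[OF fc_good[OF cD] fc_good[OF cE] L c] .
qed



lemma sq_cbox: "{0..1::real} \<times> {0..1::real} = cbox (0, 0) (1, 1)"
  by (simp add: cbox_Pair_eq)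

lemma set_int_bounded:
  fixes H :: "'a::euclidean_space \<Rightarrow> real"
  assumes Hm: "H \<in> borel_measurable borel" and Hb: "\<And>z. \<bar>H z\<bar> \<le> B"
    and S: "S \<in> sets borel" "emeasure lborel S < \<infinity>"
  shows "set_integrable lborel S H"
  unfolding set_integrable_def
  by (rule integrableI_bounded_set[where A=S and B=B]) (use Hm Hb S in \<open>auto simp: indicator_def\<close>)

lemma fub:
  fixes H :: "real \<times> real \<Rightarrow> real"
  assumes Hm: "H \<in> borel_measurable borel" and Hb: "\<And>z. \<bar>H z\<bar> \<le> 1"
  shows "integral ({0..1} \<times> {0..1}) H = (\<integral>v. indicator {0..1} v * integral {0..1} (\<lambda>t. H (t, v)) \<partial>lborel)"
proof -
  let ?S = "{0..1::real} \<times> {0..1::real}"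
  have Sb: "?S \<in> sets borel" by (simp add: sq_cbox)
  have Sf: "emeasure lborel ?S < \<infinity>" unfolding sq_cbox by (rule emeasure_lborel_cbox_finite)
  have si: "set_integrable lborel ?S H" by (rule set_int_bounded[OF Hm Hb Sb Sf])
  define g where "g t v = indicator ?S (t, v) * H (t, v)" for t v
  have "integral ?S H = (LINT z : ?S | lborel. H z)" using set_borel_integral_eq_integral(2)[OF si] by simp
  also have "\<dots> = integral\<^sup>L lborel (case_prod g)"
    by (simp add: set_lebesgue_integral_def g_def case_prod_beta')
  also have "\<dots> = integral\<^sup>L (lborel \<Otimes>\<^sub>M lborel) (case_prod g)" by (simp add: lborel_prod)
  also have "\<dots> = (\<integral>v. (\<integral>t. g t v \<partial>lborel) \<partial>lborel)"
  proof -
    have "integrable lborel (case_prod g)"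
      using si unfolding set_integrable_def g_def by (simp add: case_prod_beta')
    then have "integrable (lborel \<Otimes>\<^sub>M lborel) (case_prod g)" by (simp add: lborel_prod)
    then show ?thesis by (rule lborel_pair.integral_snd[symmetric])
  qed
  also have "\<dots> = (\<integral>v. indicator {0..1} v * integral {0..1} (\<lambda>t. H (t, v)) \<partial>lborel)"
  proof (rule Bochner_Integration.integral_cong[OF refl])
    fix v :: real
    have Hv: "(\<lambda>t. H (t, v)) \<in> borel_measurable borel" using Hm by measurable
    have siv: "set_integrable lborel {0..1} (\<lambda>t. H (t, v))"
      by (rule set_int_bounded[OF Hv Hb]) auto
    have "(\<integral>t. g t v \<partial>lborel) = (\<integral>t. indicator {0..1} v * (indicator {0..1} t *\<^sub>R H (t, v)) \<partial>lborel)"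
      by (rule Bochner_Integration.integral_cong) (auto simp: g_def indicator_def)
    also have "\<dots> = indicator {0..1} v * (LINT t : {0..1} | lborel. H (t, v))"
      by (simp add: set_lebesgue_integral_def)
    also have "\<dots> = indicator {0..1} v * integral {0..1} (\<lambda>t. H (t, v))"
      using set_borel_integral_eq_integral(2)[OF siv] by simp
    finally show "(\<integral>t. g t v \<partial>lborel) = indicator {0..1} v * integral {0..1} (\<lambda>t. H (t, v))" .
  qed
  finally show ?thesis .
qed



lemma xi_2d:
  assumes c: "copula D"
  shows "integral ({0..1} \<times> {0..1}) (\<lambda>(t, v). (d1 D t v)\<^sup>2) =
    (\<integral>v. indicator {0..1} v * integral {0..1} (\<lambda>t. (fc D v t)\<^sup>2) \<partial>lborel)"
proof -
  define H where "H z = (fc D (snd z) (fst z))\<^sup>2" for z :: "real \<times> real"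
  have Hm: "H \<in> borel_measurable borel" unfolding H_def using fc_pair_measurable[OF c] by measurable
  have Hb: "\<bar>H z\<bar> \<le> 1" for z
  proof -
    have "0 \<le> fc D (snd z) (fst z)" "fc D (snd z) (fst z) \<le> 1" using fc_bnd[OF c] by auto
    then show ?thesis unfolding H_def by (simp add: power_le_one abs_le_iff)
  qed
  have k: "(1::real, 0::real) \<in> Basis" by (simp add: Basis_prod_def)
  define N where "N = {z :: real \<times> real. z \<bullet> (1, 0) = 0} \<union> {z. z \<bullet> (1, 0) = 1}"
  have negN: "negligible N" unfolding N_def using negligible_standard_hyperplane[OF k] by auto
  have "integral ({0..1} \<times> {0..1}) (\<lambda>(t, v). (d1 D t v)\<^sup>2) = integral ({0..1} \<times> {0..1}) H"
  proof (rule integral_spike[OF negN])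
    fix z assume z: "z \<in> {0..1} \<times> {0..1} - N"
    obtain t v where tv: "z = (t, v)" by (cases z)
    have "t \<in> {0<..<1}" "v \<in> {0..1}" using z tv by (auto simp: N_def)
    then show "H z = (case z of (t, v) \<Rightarrow> (d1 D t v)\<^sup>2)" using d1_eq_fc[of t v D] tv by (simp add: H_def)
  qed
  also have "\<dots> = (\<integral>v. indicator {0..1} v * integral {0..1} (\<lambda>t. H (t, v)) \<partial>lborel)"
    by (rule fub[OF Hm Hb])
  finally show ?thesis by (simp add: H_def)
qed

lemma xi_eq:
  assumes cD: "copula D" and cE: "copula E"
    and L: "\<And>v s. v \<in> {0..1} \<Longrightarrow> lvl (fc D v) s = lvl (fc E v) s"
  shows "chatterjee_xi D = chatterjee_xi E"
proof -
  have "(\<integral>v. indicator {0..1} v * integral {0..1} (\<lambda>t. (fc D v t)\<^sup>2) \<partial>lborel) =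
        (\<integral>v. indicator {0..1} v * integral {0..1} (\<lambda>t. (fc E v t)\<^sup>2) \<partial>lborel)"
  proof (rule Bochner_Integration.integral_cong[OF refl])
    fix v :: real
    show "indicator {0..1} v * integral {0..1} (\<lambda>t. (fc D v t)\<^sup>2) = indicator {0..1} v * integral {0..1} (\<lambda>t. (fc E v t)\<^sup>2)"
    proof (cases "v \<in> {0..1}")
      case True
      then show ?thesis using xi_v[OF cD cE L[OF True]] by simp
    qed simp
  qed
  then show ?thesis unfolding chatterjee_xi_def xi_2d[OF cD] xi_2d[OF cE] by simp
qed

lemma cop_cont_sq:
  assumes c: "copula C"
  shows "continuous_on ({0..1} \<times> {0..1}) (\<lambda>(u, v). C u v)"
proof -
  have "continuous_on ({0..1} \<times> {0..1}) (\<lambda>z. cext C (fst z) (snd z))"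
    by (rule continuous_on_subset[OF cext_cont[OF c]]) simp
  then show ?thesis
    by (rule continuous_on_eq) (auto simp: cext_eq)
qed

lemma iter2:
  fixes f :: "real \<Rightarrow> real \<Rightarrow> real"
  assumes c: "continuous_on ({0..1} \<times> {0..1}) (\<lambda>(u, v). f u v)"
  shows "integral ({0..1} \<times> {0..1}) (\<lambda>(u, v). f u v) = integral {0..1} (\<lambda>v. integral {0..1} (\<lambda>u. f u v))"
proof -
  have c': "continuous_on (cbox (0, 0) (1, 1)) (\<lambda>(u, v). f u v)" using c by (simp add: sq_cbox)
  have "integral ({0..1} \<times> {0..1}) (\<lambda>(u, v). f u v) = integral (cbox (0::real, 0::real) (1, 1)) (\<lambda>(u, v). f u v)"
    by (simp add: sq_cbox)
  also have "\<dots> = integral (cbox 0 1) (\<lambda>x. integral (cbox 0 1) (\<lambda>y. f x y))"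
    using integral_prod_continuous[OF c'] by simp
  also have "\<dots> = integral (cbox 0 1) (\<lambda>y. integral (cbox 0 1) (\<lambda>x. f x y))"
    by (rule integral_swap_continuous) (use c' in simp)
  finally show ?thesis by simp
qed

lemma integral_reflect01:
  fixes h :: "real \<Rightarrow> real"
  shows "integral {0..1} (\<lambda>u. h (1 - u)) = integral {0..1} h"
proof -
  have e: "(\<lambda>x. h (- x + 1)) = (\<lambda>u. h (1 - u))" by (simp add: fun_eq_iff)
  have "integral {0..1} (\<lambda>u. h (1 - u)) = integral {-1..0} (\<lambda>y. h (y + 1))"
    using Henstock_Kurzweil_Integration.integral_reflect_real[of 0 "-1" "\<lambda>y. h (y + 1)"] unfolding e by simp
  also have "\<dots> = integral {0 - 1..1 - 1} (\<lambda>y. h (y + 1))" by simp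
  also have "\<dots> = integral {0..1} h" by (rule integral_shift_real_ivl)
  finally show ?thesis .
qed

lemma int_sq_integrable:
  fixes f :: "real \<Rightarrow> real \<Rightarrow> real"
  assumes "continuous_on ({0..1} \<times> {0..1}) (\<lambda>(u, v). f u v)"
  shows "(\<lambda>(u, v). f u v) integrable_on ({0..1::real} \<times> {0..1::real})"
  using integrable_continuous[of "(0,0)" "(1,1)" "\<lambda>(u, v). f u v"] assms by (simp add: sq_cbox)

lemma rho_reflc_int:
  assumes c: "copula C"
  shows "integral ({0..1} \<times> {0..1}) (\<lambda>(u, v). v - C (1 - u) v) = 1 / 2 - integral ({0..1} \<times> {0..1}) (\<lambda>(u, v). C u v)"
proof -
  let ?S = "{0..1::real} \<times> {0..1::real}"
  have cC: "continuous_on ?S (\<lambda>(u, v). C u v)" by (rule cop_cont_sq[OF c])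
  have cR: "continuous_on ?S (\<lambda>(u, v). reflc C u v)" by (rule cop_cont_sq[OF copula_reflc[OF c]])
  have cv: "continuous_on ?S (\<lambda>(u, v::real). v)" by (auto intro!: continuous_intros simp: case_prod_beta')
  have cC1: "continuous_on ?S (\<lambda>(u, v). C (1 - u) v)"
  proof -
    have "continuous_on ?S (\<lambda>(u, v). v - reflc C u v)"
      using continuous_on_diff[OF cv cR] by (simp add: case_prod_beta')
    then show ?thesis by (simp add: reflc_def)
  qed
  have "integral ?S (\<lambda>(u, v). v - C (1 - u) v) = integral ?S (\<lambda>(u, v). v) - integral ?S (\<lambda>(u, v). C (1 - u) v)"
    using integral_diff[OF int_sq_integrable[OF cv] int_sq_integrable[OF cC1]]
    by (simp add: case_prod_beta')
  also have "integral ?S (\<lambda>(u, v::real). v) = 1 / 2"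
  proof -
    have "integral ?S (\<lambda>(u, v::real). v) = integral {0..1} (\<lambda>v. integral {0..1} (\<lambda>u::real. v))"
      by (rule iter2[OF cv])
    also have "\<dots> = integral {0..1} (\<lambda>v::real. v)" by simp
    also have "\<dots> = 1 / 2"
      using integral_power[of 1 0 1] by simp
    finally show ?thesis .
  qed
  also have "integral ?S (\<lambda>(u, v). C (1 - u) v) = integral ?S (\<lambda>(u, v). C u v)"
  proof -
    have "integral ?S (\<lambda>(u, v). C (1 - u) v) = integral {0..1} (\<lambda>v. integral {0..1} (\<lambda>u. C (1 - u) v))"
      by (rule iter2[OF cC1])
    also have "\<dots> = integral {0..1} (\<lambda>v. integral {0..1} (\<lambda>u. C u v))"
      using integral_reflect01[of "\<lambda>u. C u _"] by simp
    also have "\<dots> = integral ?S (\<lambda>(u, v). C u v)" by (rule iter2[OF cC, symmetric])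
    finally show ?thesis .
  qed
  finally show ?thesis .
qed

lemma rho_mono:
  assumes cC: "copula C" and cD: "copula D" and le: "\<And>u v. u \<in> {0..1} \<Longrightarrow> v \<in> {0..1} \<Longrightarrow> C u v \<le> D u v"
  shows "spearman_rho C \<le> spearman_rho D"
proof -
  have "integral ({0..1} \<times> {0..1}) (\<lambda>(u, v). C u v) \<le> integral ({0..1} \<times> {0..1}) (\<lambda>(u, v). D u v)"
    by (rule integral_le[OF int_sq_integrable[OF cop_cont_sq[OF cC]] int_sq_integrable[OF cop_cont_sq[OF cD]]])
       (use le in auto)
  then show ?thesis by (simp add: spearman_rho_def)
qed

lemma drr_lvl_eq: "(\<And>s. lvl f s = lvl g s) \<Longrightarrow> drr f = drr g"
  by (simp add: drr_def fun_eq_iff)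

lemma lvl_fc_reflc:
  assumes c: "copula D" and v: "v \<in> {0..1}"
  shows "lvl (fc (reflc D) v) s = lvl (fc D v) s"
  using d1_sets(2)[OF copula_reflc[OF c] v, of s] d1_sets(2)[OF c v, of s] lvl_d1_reflc[OF c v, of s] by simp

theorem corollary2p5:
  fixes C Cup Cdown :: "real \<Rightarrow> real \<Rightarrow> real"
  assumes "copula C"
    and "incr_rearranged C Cup"
    and "decr_rearranged C Cdown"
  shows "chatterjee_xi Cdown = chatterjee_xi C \<and> chatterjee_xi C = chatterjee_xi Cup \<and>
         spearman_rho Cdown \<le> spearman_rho C \<and> spearman_rho C \<le> spearman_rho Cup \<and>
         spearman_rho Cdown = - spearman_rho Cup"
proof -
  have cC: "copula C" by fact
  have cU: "copula Cup" and SIU: "SI Cup" and EU: "d1S_eq Cup C"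
    using assms(2) by (auto simp: incr_rearranged_def)
  have cD: "copula Cdown" and SDD: "SD Cdown" and ED: "d1S_eq Cdown C"
    using assms(3) by (auto simp: decr_rearranged_def)
  have S1: "schur_eq1 Cup C" by (rule d1S_eq_schur[OF EU])
  have cRC: "copula (reflc C)" by (rule copula_reflc[OF cC])
  have cRD: "copula (reflc Cdown)" by (rule copula_reflc[OF cD])
  have SIRD: "SI (reflc Cdown)" by (rule SD_reflc[OF SDD])
  have S2: "schur_eq1 (reflc Cdown) (reflc C)" by (rule schur_eq1_reflc[OF cD cC d1S_eq_schur[OF ED]])
  note M1 = main_lemma[OF cC cU SIU S1]
  note M2 = main_lemma[OF cRC cRD SIRD S2]
  have xi1: "chatterjee_xi C = chatterjee_xi Cup"
    by (rule xi_eq[OF cC cU]) (rule M1(1))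
  have xi2: "chatterjee_xi Cdown = chatterjee_xi C"
  proof (rule xi_eq[OF cD cC])
    fix v s :: real assume v: "v \<in> {0..1}"
    have "lvl (fc Cdown v) s = lvl (fc (reflc Cdown) v) s" using lvl_fc_reflc[OF cD v] by simp
    also have "\<dots> = lvl (fc (reflc C) v) s" using M2(1)[OF v] by simp
    also have "\<dots> = lvl (fc C v) s" using lvl_fc_reflc[OF cC v] by simp
    finally show "lvl (fc Cdown v) s = lvl (fc C v) s" .
  qed
  have le1: "spearman_rho C \<le> spearman_rho Cup"
    by (rule rho_mono[OF cC cU]) (rule M1(3))
  have le2: "spearman_rho Cdown \<le> spearman_rho C"
  proof (rule rho_mono[OF cD cC])
    fix u v :: real assume u: "u \<in> {0..1}" and v: "v \<in> {0..1}"
    have "reflc C (1 - u) v \<le> reflc Cdown (1 - u) v" using M2(3)[OF v, of "1 - u"] u by auto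
    then show "Cdown u v \<le> C u v" by (simp add: reflc_def)
  qed
  have eqD: "Cdown u v = v - Cup (1 - u) v" if u: "u \<in> {0..1}" and v: "v \<in> {0..1}" for u v
  proof -
    have u1: "1 - u \<in> {0..1}" using u by auto
    have dd: "drr (fc (reflc C) v) = drr (fc C v)" by (rule drr_lvl_eq) (rule lvl_fc_reflc[OF cC v])
    have "reflc Cdown (1 - u) v = integral {0..1 - u} (drr (fc (reflc C) v))" using M2(2)[OF v u1] .
    also have "\<dots> = Cup (1 - u) v" using M1(2)[OF v u1] dd by simp
    finally have "reflc Cdown (1 - u) v = Cup (1 - u) v" .
    then show ?thesis by (simp add: reflc_def)
  qed
  have "integral ({0..1} \<times> {0..1}) (\<lambda>(u, v). Cdown u v) = integral ({0..1} \<times> {0..1}) (\<lambda>(u, v). v - Cup (1 - u) v)"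
    by (rule integral_cong) (auto simp: eqD)
  also have "\<dots> = 1 / 2 - integral ({0..1} \<times> {0..1}) (\<lambda>(u, v). Cup u v)" by (rule rho_reflc_int[OF cU])
  finally have "spearman_rho Cdown = - spearman_rho Cup" by (simp add: spearman_rho_def)
  then show ?thesis using xi1 xi2 le1 le2 by simp
qed


end
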